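(* Let $a_i,b_i,a'_i,b'_i\ge 0$ ($i=1,2$), $v_1=(a'_1-a_1,b'_1-b_1)$, $v_2=(a'_2-a_2,b'_2-b_2)$, with $-1<\frac{b'_1-b_1}{a'_1-a_1}<0$ and $\frac{b'_2-b_2}{a'_2-a_2}<-1$, and fix $\epsilon\in(0,1)$. Let $A$ be the intersection point of $x^{a'_1-a_1}y^{b'_1-b_1}=\epsilon^2$ and $x^{a'_2-a_2}y^{b'_2-b_2}=\epsilon^{-2}$, and $D$ the intersection point of $x^{a'_1-a_1}y^{b'_1-b_1}=\epsilon^2$ and $x^{a'_2-a_2}y^{b'_2-b_2}=\epsilon^{2}$. Let $\mathbf{x}(t)$ be the solution with $\mathbf{x}(0)=D$ of $$\begin{pmatrix}\dot x\\ \dot y\end{pmatrix}=\big(\epsilon x^{a_1}y^{b_1}-\tfrac1\epsilon x^{a'_1}y^{b'_1}\big)v_1+\big(\tfrac1\epsilon x^{a_2}y^{b_2}-\epsilon x^{a'_2}y^{b'_2}\big)v_2,$$ which converges to $A$, and let $J$ be the Jacobian matrix of this vector field at $A$. Then $\mathbf{x}(t)$ approaches $A$ along the slower eigendirection of $J$, i.e. the eigendirection corresponding to the eigenvalue of smaller magnitude.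
   Context: This is the mass-action system of the network $a_1X+b_1Y\rightleftharpoons a'_1X+b'_1Y$, $a_2X+b_2Y\rightleftharpoons a'_2X+b'_2Y$ with constant rate constants $k_1=\epsilon,k_2=1/\epsilon,k_3=1/\epsilon,k_4=\epsilon$, for which $A$ is the detailed balanced positive equilibrium. *)

theory Defs
  imports "HOL-Analysis.Analysis"
begin

text \<open>Mass-action vector field of the network
  a1 X + b1 Y <-> a1' X + b1' Y (rates eps, 1/eps),
  a2 X + b2 Y <-> a2' X + b2' Y (rates 1/eps, eps),
  on the positive quadrant; points are pairs (x, y).\<close>

definition mass_action_field ::
  "real \<Rightarrow> real \<Rightarrow> real \<Rightarrow> real \<Rightarrow> real \<Rightarrow> real \<Rightarrow> real \<Rightarrow> real \<Rightarrow> real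
   \<Rightarrow> real \<times> real \<Rightarrow> real \<times> real" where
  "mass_action_field a1 b1 a1' b1' a2 b2 a2' b2' \<epsilon> p =
     (let x = fst p; y = snd p;
          r1 = \<epsilon> * x powr a1 * y powr b1 - (1/\<epsilon>) * x powr a1' * y powr b1';
          r2 = (1/\<epsilon>) * x powr a2 * y powr b2 - \<epsilon> * x powr a2' * y powr b2'
      in (r1 * (a1' - a1) + r2 * (a2' - a2), r1 * (b1' - b1) + r2 * (b2' - b2)))"

end

theory Submission
  imports Defs "HOL-Real_Asymp.Real_Asymp"
begin


lemma deriv_nonpos_mono:
  fixes g g' :: "real \<Rightarrow> real"
  assumes d: "\<And>t. t \<ge> a \<Longrightarrow> (g has_real_derivative g' t) (at t within {a..})"
    and n: "\<And>t. s \<le> t \<Longrightarrow> t \<le> s' \<Longrightarrow> g' t \<le> 0" and as: "a \<le> s" and ss: "s \<le> s'"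
  shows "g s' \<le> g s"
proof (cases "s = s'")
  case True then show ?thesis by simp
next
  case False
  with ss have lt: "s < s'" by simp
  have "continuous_on {s..s'} g"
  proof (rule continuous_on_subset[of "{a..}"])
    show "continuous_on {a..} g"
      using d by (intro DERIV_continuous_on) auto
  qed (use as in auto)
  moreover have "g differentiable at t" if "s < t" "t < s'" for t
  proof -
    have "t \<in> interior {a..}" using that as by simp
    then have "at t within {a..} = at t" by (rule at_within_interior)
    with d[of t] that as show ?thesis
      using real_differentiable_def by fastforce
  qed
  ultimately obtain l z where z: "s < z" "z < s'" "(g has_real_derivative l) (at z)"
    "g s' - g s = (s' - s) * l"
    using MVT[OF lt] by blast
  have "z \<in> interior {a..}" using z as by simp
  then have "at z within {a..} = at z" by (rule at_within_interior)
  with d[of z] z as have "(g has_real_derivative g' z) (at z)" by simp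
  with z(3) have "l = g' z" by (rule DERIV_unique)
  with n[of z] z lt show ?thesis
    by (metis diff_ge_0_iff_ge le_iff_diff_le_0 less_eq_real_def mult_nonneg_nonpos)
qed

lemma right_pos:
  fixes g :: "real \<Rightarrow> real"
  assumes d: "(g has_real_derivative l) (at T within {a..})" and aT: "a \<le> T"
    and g0: "g T \<ge> 0" and gl: "g T = 0 \<Longrightarrow> l > 0"
  shows "\<exists>\<delta>>0. \<forall>h. 0 < h \<and> h < \<delta> \<longrightarrow> g (T + h) > 0"
proof (cases "g T = 0")
  case False
  with g0 have pos: "g T > 0" by simp
  have "continuous (at T within {a..}) g" using d by (rule DERIV_continuous)
  then have "(g \<longlongrightarrow> g T) (at T within {a..})" by (simp add: continuous_within)
  then have "eventually (\<lambda>y. g y > 0) (at T within {a..})"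
    using pos by (rule order_tendstoD(1))
  then obtain e where e: "e > 0" "\<forall>y\<in>{a..}. y \<noteq> T \<and> dist y T < e \<longrightarrow> g y > 0"
    unfolding eventually_at by blast
  show ?thesis
  proof (intro exI[of _ e] conjI allI impI)
    fix h assume "0 < h \<and> h < e"
    then show "g (T + h) > 0" using e(2)[rule_format, of "T + h"] aT by (simp add: dist_real_def)
  qed (use e in simp)
next
  case True
  with gl have lp: "l > 0" by simp
  have "((\<lambda>y. (g y - g T) / (y - T)) \<longlongrightarrow> l) (at T within {a..})"
    using d by (simp add: has_field_derivative_iff)
  then have "eventually (\<lambda>y. (g y - g T) / (y - T) > 0) (at T within {a..})"
    using lp by (rule order_tendstoD(1))
  then obtain e where e: "e > 0" "\<forall>y\<in>{a..}. y \<noteq> T \<and> dist y T < e \<longrightarrow> (g y - g T) / (y - T) > 0"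
    unfolding eventually_at by blast
  show ?thesis
  proof (intro exI[of _ e] conjI allI impI)
    fix h assume h: "0 < h \<and> h < e"
    then have "(g (T + h) - g T) / h > 0" using e(2)[rule_format, of "T + h"] aT by (simp add: dist_real_def)
    then show "g (T + h) > 0" using h True by (simp add: zero_less_divide_iff)
  qed (use e in simp)
qed


lemma lin_decay:
  fixes q err :: "real \<Rightarrow> real"
  assumes g: "\<gamma> > 0"
    and d: "\<And>t. t \<ge> a \<Longrightarrow> (q has_real_derivative (- \<gamma> * q t + err t)) (at t within {a..})"
    and e: "\<And>t. t \<ge> a \<Longrightarrow> \<bar>err t\<bar> \<le> c" and t: "t \<ge> a"
  shows "\<bar>q t\<bar> \<le> c / \<gamma> + exp (- \<gamma> * (t - a)) * (\<bar>q a\<bar> + c / \<gamma>)"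
proof -
  define h1 where "h1 s = exp (\<gamma> * s) * (q s - c / \<gamma>)" for s
  define h2 where "h2 s = - (exp (\<gamma> * s) * (q s + c / \<gamma>))" for s
  have "h1 t \<le> h1 a"
  proof (rule deriv_nonpos_mono[where a = a and g = h1 and s = a and s' = t and g' = "\<lambda>s. exp (\<gamma> * s) * (err s - c)"])
    fix s assume "a \<le> s"
    then have D: "(q has_real_derivative (- \<gamma> * q s + err s)) (at s within {a..})" using d by auto
    show "(h1 has_real_derivative exp (\<gamma> * s) * (err s - c)) (at s within {a..})"
      unfolding h1_def
      using g by (auto intro!: derivative_eq_intros D simp: field_simps)
  next
    fix s assume "a \<le> s" "s \<le> t"
    then show "exp (\<gamma> * s) * (err s - c) \<le> 0" using e[of s]
      by (simp add: mult_nonneg_nonpos)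
  qed (use t in auto)
  then have "exp (- \<gamma> * t) * (exp (\<gamma> * t) * (q t - c / \<gamma>)) \<le> exp (- \<gamma> * t) * (exp (\<gamma> * a) * (q a - c / \<gamma>))"
    unfolding h1_def by (intro mult_left_mono) auto
  moreover have e1: "exp (- \<gamma> * t) * exp (\<gamma> * t) = 1" by (simp add: exp_add[symmetric])
  moreover have e2: "exp (- \<gamma> * t) * exp (\<gamma> * a) = exp (- \<gamma> * (t - a))" by (simp add: exp_add[symmetric] algebra_simps)
  moreover have "exp (- \<gamma> * t) * (exp (\<gamma> * t) * (q t - c / \<gamma>)) = q t - c / \<gamma>"
    by (metis e1 mult.assoc mult_1)
  moreover have "exp (- \<gamma> * t) * (exp (\<gamma> * a) * (q a - c / \<gamma>)) = exp (- \<gamma> * (t - a)) * (q a - c / \<gamma>)"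
    by (metis e2 mult.assoc)
  ultimately have A: "q t - c / \<gamma> \<le> exp (- \<gamma> * (t - a)) * (q a - c / \<gamma>)"
    by linarith
  have "h2 t \<le> h2 a"
  proof (rule deriv_nonpos_mono[where a = a and g = h2 and s = a and s' = t and g' = "\<lambda>s. - (exp (\<gamma> * s) * (err s + c))"])
    fix s assume "a \<le> s"
    then have D: "(q has_real_derivative (- \<gamma> * q s + err s)) (at s within {a..})" using d by auto
    show "(h2 has_real_derivative - (exp (\<gamma> * s) * (err s + c))) (at s within {a..})"
      unfolding h2_def
      using g by (auto intro!: derivative_eq_intros D simp: field_simps)
  next
    fix s assume "a \<le> s" "s \<le> t"
    then show "- (exp (\<gamma> * s) * (err s + c)) \<le> 0" using e[of s]
      by simp
  qed (use t in auto)
  then have "exp (- \<gamma> * t) * (exp (\<gamma> * a) * (q a + c / \<gamma>)) \<le> exp (- \<gamma> * t) * (exp (\<gamma> * t) * (q t + c / \<gamma>))"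
    unfolding h2_def by (intro mult_left_mono) auto
  moreover have "exp (- \<gamma> * t) * (exp (\<gamma> * t) * (q t + c / \<gamma>)) = q t + c / \<gamma>"
    by (metis e1 mult.assoc mult_1)
  moreover have "exp (- \<gamma> * t) * (exp (\<gamma> * a) * (q a + c / \<gamma>)) = exp (- \<gamma> * (t - a)) * (q a + c / \<gamma>)"
    by (metis e2 mult.assoc)
  ultimately have B: "q t + c / \<gamma> \<ge> exp (- \<gamma> * (t - a)) * (q a + c / \<gamma>)"
    by linarith
  have E: "exp (- \<gamma> * (t - a)) \<ge> 0" by simp
  have c0: "c / \<gamma> \<ge> 0" using e[of a] g by auto
  have "exp (- \<gamma> * (t - a)) * (q a - c / \<gamma>) \<le> exp (- \<gamma> * (t - a)) * (\<bar>q a\<bar> + c / \<gamma>)"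
    using c0 E by (intro mult_left_mono) auto
  moreover have "exp (- \<gamma> * (t - a)) * (- (\<bar>q a\<bar> + c / \<gamma>)) \<le> exp (- \<gamma> * (t - a)) * (q a + c / \<gamma>)"
    using c0 E by (intro mult_left_mono) auto
  ultimately show ?thesis using A B unfolding abs_le_iff by linarith
qed



definition det2 :: "real \<times> real \<Rightarrow> real \<times> real \<Rightarrow> real" where
  "det2 a b = fst a * snd b - snd a * fst b"

lemma det2_decomp:
  assumes uw: "det2 u w \<noteq> 0"
  shows "p = (det2 p w / det2 u w) *\<^sub>R u + (det2 u p / det2 u w) *\<^sub>R w"
proof -
  have e: "det2 p w *\<^sub>R u + det2 u p *\<^sub>R w = det2 u w *\<^sub>R p"
    unfolding det2_def by (simp add: prod_eq_iff algebra_simps)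
  have "p = (1 / det2 u w) *\<^sub>R (det2 u w *\<^sub>R p)" using uw by simp
  also have "\<dots> = (det2 p w / det2 u w) *\<^sub>R u + (det2 u p / det2 u w) *\<^sub>R w"
    unfolding e[symmetric] by (simp add: scaleR_add_right)
  finally show ?thesis .
qed

lemma det2_scale: "det2 (c *\<^sub>R a) b = c * det2 a b"
  unfolding det2_def by (simp add: algebra_simps)

lemma node:
  fixes J :: "real \<times> real \<Rightarrow> real \<times> real" and d R :: "real \<Rightarrow> real \<times> real"
    and u w :: "real \<times> real"
  assumes lin: "linear J" and Ju: "J u = \<mu>1 *\<^sub>R u" and Jw: "J w = \<mu>2 *\<^sub>R w" and mu: "\<mu>2 < \<mu>1"
    and un: "norm u = 1" and uw: "det2 u w \<noteq> 0"
    and der: "\<And>t. t \<ge> 0 \<Longrightarrow> (d has_vector_derivative (J (d t) + R t)) (at t within {0..})"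
    and small: "\<And>e. e > 0 \<Longrightarrow> eventually (\<lambda>t. norm (R t) \<le> e * norm (d t)) at_top"
    and nz: "\<And>t. t \<ge> 0 \<Longrightarrow> d t \<noteq> 0"
    and Kp: "K > 0"
    and cone: "eventually (\<lambda>t. norm (d t) \<le> K * (det2 (d t) w / det2 u w)) at_top"
  shows "((\<lambda>t. (1 / norm (d t)) *\<^sub>R d t) \<longlongrightarrow> u) at_top"
proof -
  define \<Delta> where "\<Delta> = det2 u w"
  have \<Delta>0: "\<Delta> \<noteq> 0" using uw by (simp add: \<Delta>_def)
  define \<phi> where "\<phi> p = det2 p w / \<Delta>" for p
  define \<psi> where "\<psi> p = det2 u p / \<Delta>" for p
  have dec: "p = \<phi> p *\<^sub>R u + \<psi> p *\<^sub>R w" for p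
  proof -
    have e: "det2 p w *\<^sub>R u + det2 u p *\<^sub>R w = \<Delta> *\<^sub>R p"
      unfolding \<Delta>_def det2_def by (simp add: prod_eq_iff algebra_simps)
    have "p = (1 / \<Delta>) *\<^sub>R (\<Delta> *\<^sub>R p)" using uw by (simp add: \<Delta>_def)
    also have "\<dots> = \<phi> p *\<^sub>R u + \<psi> p *\<^sub>R w"
      unfolding e[symmetric] \<phi>_def \<psi>_def by (simp add: scaleR_add_right)
    finally show ?thesis .
  qed
  have \<phi>lin: "\<phi> (a *\<^sub>R x + b *\<^sub>R y) = a * \<phi> x + b * \<phi> y" for a b x y
    unfolding \<phi>_def det2_def by (simp add: divide_inverse algebra_simps)
  have \<psi>lin: "\<psi> (a *\<^sub>R x + b *\<^sub>R y) = a * \<psi> x + b * \<psi> y" for a b x y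
    unfolding \<psi>_def det2_def by (simp add: divide_inverse algebra_simps)
  have \<phi>u: "\<phi> u = 1" and \<phi>w: "\<phi> w = 0" and \<psi>u: "\<psi> u = 0" and \<psi>w: "\<psi> w = 1"
    using uw unfolding \<phi>_def \<psi>_def \<Delta>_def det2_def by (auto simp: field_simps)
  have Jp: "J p = (\<mu>1 * \<phi> p) *\<^sub>R u + (\<mu>2 * \<psi> p) *\<^sub>R w" for p
  proof -
    have "J p = J (\<phi> p *\<^sub>R u + \<psi> p *\<^sub>R w)" using dec[of p] by simp
    also have "\<dots> = \<phi> p *\<^sub>R J u + \<psi> p *\<^sub>R J w"
      using lin by (simp add: linear_add linear_scale)
    finally show ?thesis using Ju Jw by (simp add: mult.commute)
  qed
  have \<phi>J: "\<phi> (J p) = \<mu>1 * \<phi> p" for p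
    using \<phi>lin[of "\<mu>1 * \<phi> p" u "\<mu>2 * \<psi> p" w] \<phi>u \<phi>w Jp[of p] by simp
  have \<psi>J: "\<psi> (J p) = \<mu>2 * \<psi> p" for p
    using \<psi>lin[of "\<mu>1 * \<phi> p" u "\<mu>2 * \<psi> p" w] \<psi>u \<psi>w Jp[of p] by simp
  have \<phi>add: "\<phi> (p + r) = \<phi> p + \<phi> r" for p r
    using \<phi>lin[of 1 p 1 r] by simp
  have \<psi>add: "\<psi> (p + r) = \<psi> p + \<psi> r" for p r
    using \<psi>lin[of 1 p 1 r] by simp
  define C\<phi> where "C\<phi> = (\<bar>fst w\<bar> + \<bar>snd w\<bar>) / \<bar>\<Delta>\<bar>"
  define C\<psi> where "C\<psi> = (\<bar>fst u\<bar> + \<bar>snd u\<bar>) / \<bar>\<Delta>\<bar>"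
  have absfst: "\<bar>fst p\<bar> \<le> norm p" and abssnd: "\<bar>snd p\<bar> \<le> norm p" for p :: "real \<times> real"
    using norm_fst_le[of "fst p" "snd p"] norm_snd_le[of "snd p" "fst p"] by auto
  have \<phi>b: "\<bar>\<phi> p\<bar> \<le> C\<phi> * norm p" for p
  proof -
    have "\<bar>det2 p w\<bar> \<le> \<bar>fst p\<bar> * \<bar>snd w\<bar> + \<bar>snd p\<bar> * \<bar>fst w\<bar>"
      unfolding det2_def by (metis abs_mult abs_triangle_ineq4)
    also have "\<dots> \<le> norm p * \<bar>snd w\<bar> + norm p * \<bar>fst w\<bar>"
      by (intro add_mono mult_right_mono absfst abssnd) auto
    finally have "\<bar>det2 p w\<bar> \<le> (\<bar>fst w\<bar> + \<bar>snd w\<bar>) * norm p" by (simp add: algebra_simps)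
    then show ?thesis using uw unfolding \<phi>_def C\<phi>_def \<Delta>_def
      by (simp add: abs_divide divide_right_mono field_simps)
  qed
  have \<psi>b: "\<bar>\<psi> p\<bar> \<le> C\<psi> * norm p" for p
  proof -
    have "\<bar>det2 u p\<bar> \<le> \<bar>fst u\<bar> * \<bar>snd p\<bar> + \<bar>snd u\<bar> * \<bar>fst p\<bar>"
      unfolding det2_def by (metis abs_mult abs_triangle_ineq4)
    also have "\<dots> \<le> \<bar>fst u\<bar> * norm p + \<bar>snd u\<bar> * norm p"
      by (intro add_mono mult_left_mono absfst abssnd) auto
    finally have "\<bar>det2 u p\<bar> \<le> (\<bar>fst u\<bar> + \<bar>snd u\<bar>) * norm p" by (simp add: algebra_simps)
    then show ?thesis using uw unfolding \<psi>_def C\<psi>_def \<Delta>_def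
      by (simp add: abs_divide divide_right_mono field_simps)
  qed
  have C\<phi>0: "C\<phi> \<ge> 0" and C\<psi>0: "C\<psi> \<ge> 0" unfolding C\<phi>_def C\<psi>_def by auto
  have fder: "((\<lambda>t. \<phi> (d t)) has_real_derivative (\<mu>1 * \<phi> (d t) + \<phi> (R t))) (at t within {0..})"
    and gder: "((\<lambda>t. \<psi> (d t)) has_real_derivative (\<mu>2 * \<psi> (d t) + \<psi> (R t))) (at t within {0..})"
    if t: "t \<ge> 0" for t
  proof -
    have D: "(d has_vector_derivative (J (d t) + R t)) (at t within {0..})" using der t by simp
    have D1: "((\<lambda>t. fst (d t)) has_real_derivative fst (J (d t) + R t)) (at t within {0..})"
      using bounded_linear.has_vector_derivative[OF bounded_linear_fst D]
      by (simp add: has_real_derivative_iff_has_vector_derivative)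
    have D2: "((\<lambda>t. snd (d t)) has_real_derivative snd (J (d t) + R t)) (at t within {0..})"
      using bounded_linear.has_vector_derivative[OF bounded_linear_snd D]
      by (simp add: has_real_derivative_iff_has_vector_derivative)
    have "((\<lambda>t. \<phi> (d t)) has_real_derivative \<phi> (J (d t) + R t)) (at t within {0..})"
      unfolding \<phi>_def det2_def
      by (rule derivative_eq_intros D1 D2 refl | simp add: \<Delta>0)+
    then show "((\<lambda>t. \<phi> (d t)) has_real_derivative (\<mu>1 * \<phi> (d t) + \<phi> (R t))) (at t within {0..})"
      by (simp add: \<phi>add \<phi>J)
    have "((\<lambda>t. \<psi> (d t)) has_real_derivative \<psi> (J (d t) + R t)) (at t within {0..})"
      unfolding \<psi>_def det2_def
      by (rule derivative_eq_intros D1 D2 refl | simp add: \<Delta>0)+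
    then show "((\<lambda>t. \<psi> (d t)) has_real_derivative (\<mu>2 * \<psi> (d t) + \<psi> (R t))) (at t within {0..})"
      by (simp add: \<psi>add \<psi>J)
  qed
  define f where "f t = \<phi> (d t)" for t
  define g where "g t = \<psi> (d t)" for t
  define q where "q t = g t / f t" for t
  define \<gamma> where "\<gamma> = \<mu>1 - \<mu>2"
  have \<gamma>0: "\<gamma> > 0" using mu by (simp add: \<gamma>_def)
  obtain T0 where T0: "\<And>t. t \<ge> T0 \<Longrightarrow> norm (d t) \<le> K * (det2 (d t) w / det2 u w)"
    using cone unfolding eventually_at_top_linorder by blast
  define T0' where "T0' = max T0 0"
  have fpos: "f t > 0" and nd: "norm (d t) \<le> K * f t" if "t \<ge> T0'" for t
  proof -
    have "norm (d t) \<le> K * f t" using T0[of t] that unfolding T0'_def f_def \<phi>_def \<Delta>_def by simp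
    moreover have "norm (d t) > 0" using nz[of t] that by (simp add: T0'_def)
    ultimately have "0 < K * f t" "norm (d t) \<le> K * f t" by linarith+
    then show "f t > 0" "norm (d t) \<le> K * f t" using Kp
      by (auto simp: zero_less_mult_iff)
  qed
  define M where "M = C\<psi> * K"
  have M0: "M \<ge> 0" using C\<psi>0 Kp by (simp add: M_def)
  have qM: "\<bar>q t\<bar> \<le> M" if "t \<ge> T0'" for t
  proof -
    have "\<bar>g t\<bar> \<le> C\<psi> * norm (d t)" using \<psi>b unfolding g_def by simp
    also have "\<dots> \<le> C\<psi> * (K * f t)" using nd[OF that] C\<psi>0 by (rule mult_left_mono)
    finally show ?thesis using fpos[OF that] unfolding q_def M_def
      by (simp add: abs_divide pos_divide_le_eq mult.assoc)
  qed
  have q0: "(q \<longlongrightarrow> 0) at_top"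
  proof (rule tendstoI)
    fix \<theta> :: real assume \<theta>: "\<theta> > 0"
    define E where "E = K * (C\<psi> + M * C\<phi>) + 1"
    have "K * (C\<psi> + M * C\<phi>) \<ge> 0" using Kp C\<psi>0 C\<phi>0 M0 by simp
    then have E0: "E > 0" unfolding E_def by simp
    define e where "e = \<gamma> * \<theta> / (4 * E)"
    have e0: "e > 0" using \<gamma>0 \<theta> E0 by (simp add: e_def)
    obtain T1' where T1': "\<And>t. t \<ge> T1' \<Longrightarrow> norm (R t) \<le> e * norm (d t)"
      using small[OF e0] unfolding eventually_at_top_linorder by blast
    define T1 where "T1 = max T1' T0'"
    have T1ge: "T1 \<ge> T0'" "T1 \<ge> 0" unfolding T1_def T0'_def by auto
    define err where "err t = (\<psi> (R t) - q t * \<phi> (R t)) / f t" for t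
    have qder: "(q has_real_derivative (- \<gamma> * q t + err t)) (at t within {T1..})" if t: "t \<ge> T1" for t
    proof -
      have t0: "t \<ge> 0" "t \<ge> T0'" using t T1ge by auto
      have F: "(f has_real_derivative (\<mu>1 * f t + \<phi> (R t))) (at t within {T1..})"
        using DERIV_subset[OF fder[OF t0(1)], of "{T1..}"] T1ge unfolding f_def by auto
      have G: "(g has_real_derivative (\<mu>2 * g t + \<psi> (R t))) (at t within {T1..})"
        using DERIV_subset[OF gder[OF t0(1)], of "{T1..}"] T1ge unfolding g_def by auto
      have fne: "f t \<noteq> 0" using fpos[OF t0(2)] by simp
      have "(q has_real_derivative (((\<mu>2 * g t + \<psi> (R t)) * f t - g t * (\<mu>1 * f t + \<phi> (R t))) / (f t * f t))) (at t within {T1..})"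
        unfolding q_def[abs_def] by (rule derivative_eq_intros F G refl fne)+
      moreover have "((\<mu>2 * g t + \<psi> (R t)) * f t - g t * (\<mu>1 * f t + \<phi> (R t))) / (f t * f t) = - \<gamma> * q t + err t"
        unfolding q_def err_def \<gamma>_def using fne by (simp add: field_simps)
      ultimately show ?thesis by simp
    qed
    have errb: "\<bar>err t\<bar> \<le> \<gamma> * \<theta> / 4" if t: "t \<ge> T1" for t
    proof -
      have t0: "t \<ge> T0'" "t \<ge> T1'" using t T1ge unfolding T1_def by auto
      have fp: "f t > 0" using fpos[OF t0(1)] .
      have R1: "norm (R t) \<le> e * (K * f t)"
        using T1'[OF t0(2)] nd[OF t0(1)] e0 by (meson mult_left_mono less_imp_le order_trans)
      have "\<bar>\<psi> (R t) - q t * \<phi> (R t)\<bar> \<le> \<bar>\<psi> (R t)\<bar> + \<bar>q t\<bar> * \<bar>\<phi> (R t)\<bar>"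
        by (metis abs_mult abs_triangle_ineq4)
      also have "\<dots> \<le> C\<psi> * norm (R t) + M * (C\<phi> * norm (R t))"
        by (intro add_mono mult_mono \<psi>b \<phi>b qM t0 M0) auto
      also have "\<dots> = (C\<psi> + M * C\<phi>) * norm (R t)" by (simp add: algebra_simps)
      also have "\<dots> \<le> (C\<psi> + M * C\<phi>) * (e * (K * f t))"
        using R1 C\<psi>0 C\<phi>0 M0 by (intro mult_left_mono) auto
      also have "\<dots> = (e * (K * (C\<psi> + M * C\<phi>))) * f t" by (simp add: algebra_simps)
      also have "\<dots> \<le> (e * E) * f t"
        unfolding E_def using e0 fp by (intro mult_right_mono mult_left_mono) auto
      also have "e * E = \<gamma> * \<theta> / 4" unfolding e_def using E0 by simp
      finally show ?thesis unfolding err_def using fp by (simp add: abs_divide pos_divide_le_eq)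
    qed
    have decay: "\<bar>q t\<bar> \<le> \<gamma> * \<theta> / 4 / \<gamma> + exp (- \<gamma> * (t - T1)) * (\<bar>q T1\<bar> + \<gamma> * \<theta> / 4 / \<gamma>)"
      if "t \<ge> T1" for t
      by (rule lin_decay[OF \<gamma>0 qder errb that])
    have lim: "((\<lambda>t. exp (- \<gamma> * (t - T1)) * (M + \<theta> / 4)) \<longlongrightarrow> 0) at_top"
      using \<gamma>0 by real_asymp
    then have ev: "eventually (\<lambda>t. exp (- \<gamma> * (t - T1)) * (M + \<theta> / 4) < \<theta> / 2) at_top"
      using order_tendstoD(2)[OF lim, of "\<theta> / 2"] \<theta> by linarith
    moreover have "eventually (\<lambda>t. t \<ge> T1) at_top" by simp
    ultimately show "eventually (\<lambda>t. dist (q t) 0 < \<theta>) at_top"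
    proof eventually_elim
      case (elim t)
      have qT1: "\<bar>q T1\<bar> \<le> M" using qM T1ge by simp
      have "exp (- \<gamma> * (t - T1)) * (\<bar>q T1\<bar> + \<theta> / 4) \<le> exp (- \<gamma> * (t - T1)) * (M + \<theta> / 4)"
        using qT1 by (intro mult_left_mono) auto
      moreover have eq: "\<gamma> * \<theta> / 4 / \<gamma> = \<theta> / 4" using \<gamma>0 by simp
      ultimately have "\<bar>q t\<bar> < \<theta>" using decay[OF elim(2), unfolded eq] elim(1) by linarith
      then show ?case by (simp add: dist_real_def)
    qed
  qed
  have "((\<lambda>t. (1 / norm (u + q t *\<^sub>R w)) *\<^sub>R (u + q t *\<^sub>R w)) \<longlongrightarrow> (1 / norm (u + 0 *\<^sub>R w)) *\<^sub>R (u + 0 *\<^sub>R w)) at_top"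
    using un by (intro tendsto_intros q0) auto
  then have lim: "((\<lambda>t. (1 / norm (u + q t *\<^sub>R w)) *\<^sub>R (u + q t *\<^sub>R w)) \<longlongrightarrow> u) at_top"
    using un by simp
  have "eventually (\<lambda>t. (1 / norm (u + q t *\<^sub>R w)) *\<^sub>R (u + q t *\<^sub>R w) = (1 / norm (d t)) *\<^sub>R d t) at_top"
    using eventually_ge_at_top[of T0']
  proof eventually_elim
    case (elim t)
    have fp: "f t > 0" using fpos[OF elim] .
    have "d t = f t *\<^sub>R (u + q t *\<^sub>R w)"
      using dec[of "d t"] fp unfolding q_def f_def g_def by (simp add: scaleR_add_right)
    then show ?case using fp by (simp add: abs_of_pos)
  qed
  from tendsto_cong[OF this] lim show ?thesis by simp
qed



lemma norm_sq_pair: "(norm (p::real\<times>real))^2 = (fst p)^2 + (snd p)^2"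
  by (cases p) (simp add: norm_Pair)

lemma cs_pair: "\<bar>fst p * fst q + snd p * snd q\<bar> \<le> norm p * norm (q::real\<times>real)"
  using Cauchy_Schwarz_ineq2[of p q] by (cases p, cases q) (simp add: inner_Pair)

lemma abs_helper: "\<bar>Q\<bar> \<le> L * S \<Longrightarrow> 0 \<le> 2 * L * S + 2 * (Q::real)"
  by (simp add: abs_le_iff)

lemma left_lim_nonneg:
  fixes f :: "real \<Rightarrow> real"
  assumes c: "continuous (at T within {0..}) f" and T: "T > 0"
    and nn: "\<And>t. 0 \<le> t \<Longrightarrow> t < T \<Longrightarrow> f t \<ge> 0"
  shows "f T \<ge> 0"
proof -
  have "(f \<longlongrightarrow> f T) (at T within {0..})" using c by (simp add: continuous_within)
  then have "(f \<longlongrightarrow> f T) (at T within {0..T})" by (rule tendsto_within_subset) auto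
  then have L: "(f \<longlongrightarrow> f T) (at_left T)" using at_within_Icc_at_left[OF T] by simp
  have "eventually (\<lambda>t. t \<in> {0<..<T}) (at_left T)" using T by (rule eventually_at_left_real)
  then have "eventually (\<lambda>t. 0 \<le> f t) (at_left T)" by eventually_elim (use nn in auto)
  then show ?thesis using tendsto_lowerbound[OF L] trivial_limit_at_left_real by blast
qed

lemma div_le_pos: "(k::real) > 0 \<Longrightarrow> b \<le> k * z \<Longrightarrow> b / k \<le> z"
  by (simp add: pos_divide_le_eq mult.commute)
lemma le_div_pos: "(k::real) > 0 \<Longrightarrow> k * z \<le> b \<Longrightarrow> z \<le> b / k"
  by (simp add: pos_le_divide_eq mult.commute)
lemma le_div_neg: "(k::real) < 0 \<Longrightarrow> b \<le> k * z \<Longrightarrow> z \<le> b / k"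
  by (simp add: neg_le_divide_eq mult.commute)
lemma div_le_neg: "(k::real) < 0 \<Longrightarrow> k * z \<le> b \<Longrightarrow> b / k \<le> z"
  by (simp add: neg_divide_le_eq mult.commute)

lemma ent_der: "x > 0 \<Longrightarrow> ((\<lambda>x. x * (ln x - c) - x) has_real_derivative (ln x - c)) (at x)" for x c :: real
  by (auto intro!: derivative_eq_intros simp: field_simps)

lemma half_lem1: "b - a < s \<Longrightarrow> (a + b - s) / 2 < (a::real)" by (simp add: field_simps)
lemma half_lem2: "a - b < s \<Longrightarrow> a < (a + b + s) / (2::real)" by (simp add: field_simps)

lemma cone_arith:
  fixes a b n \<delta> \<beta>1 \<beta>2 m Cl :: real
  assumes "\<beta>1 \<ge> m" "\<beta>2 \<ge> m" "m > 0" "Cl > 0" "n \<ge> 0" "\<delta> \<ge> 0"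
    and ha: "a \<ge> - (\<delta> * n)" and hb: "b \<le> \<delta> * n" and hn: "n \<le> Cl * (\<bar>a\<bar> + \<bar>b\<bar>)"
    and hd: "\<delta> * (2 * m + \<beta>1 + \<beta>2) \<le> m / (2 * Cl)"
  shows "\<beta>2 * a - \<beta>1 * b \<ge> m / (2 * Cl) * n"
proof -
  have t1: "\<beta>2 * (a + \<delta> * n) \<ge> m * (a + \<delta> * n)" using assms by (intro mult_right_mono) auto
  have t2: "\<beta>1 * (\<delta> * n - b) \<ge> m * (\<delta> * n - b)" using assms by (intro mult_right_mono) auto
  have dn: "\<delta> * n \<ge> 0" using assms by simp
  have t3: "a - b + 2 * (\<delta> * n) \<ge> \<bar>a\<bar> + \<bar>b\<bar> - 2 * (\<delta> * n)" using ha hb dn by (simp add: abs_if)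
  have t4: "\<bar>a\<bar> + \<bar>b\<bar> \<ge> n / Cl" using hn assms(4) by (simp add: divide_le_eq mult.commute)
  have t5: "m * (a - b + 2 * (\<delta> * n)) \<ge> m * (n / Cl - 2 * (\<delta> * n))"
    using t3 t4 assms(3) by (intro mult_left_mono) auto
  have t6: "\<delta> * (2 * m + \<beta>1 + \<beta>2) * n \<le> m / (2 * Cl) * n" using hd assms(5) by (rule mult_right_mono)
  have e1: "\<beta>2 * a - \<beta>1 * b = \<beta>2 * (a + \<delta> * n) + \<beta>1 * (\<delta> * n - b) - (\<beta>1 + \<beta>2) * (\<delta> * n)"
    by (simp add: algebra_simps)
  have e2: "m * (a + \<delta> * n) + m * (\<delta> * n - b) = m * (a - b + 2 * (\<delta> * n))" by (simp add: algebra_simps)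
  have e3: "m * (n / Cl - 2 * (\<delta> * n)) - (\<beta>1 + \<beta>2) * (\<delta> * n) = m * (n / Cl) - \<delta> * (2 * m + \<beta>1 + \<beta>2) * n"
    by (simp add: algebra_simps)
  have e4: "m * (n / Cl) - m / (2 * Cl) * n = m / (2 * Cl) * n" using assms(4) by (simp add: field_simps)
  show ?thesis using t1 t2 t5 t6 e1 e2 e3 e4 by linarith
qed

locale P410 =
  fixes a1 b1 a1' b1' a2 b2 a2' b2' \<epsilon> :: real
    and A D :: "real \<times> real"
    and X :: "real \<Rightarrow> real \<times> real"
    and J :: "real \<times> real \<Rightarrow> real \<times> real"
  assumes slope1: "-1 < (b1' - b1) / (a1' - a1)" "(b1' - b1) / (a1' - a1) < 0"
    and slope2: "(b2' - b2) / (a2' - a2) < -1"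
    and eps: "0 < \<epsilon>" "\<epsilon> < 1"
    and A_pos: "fst A > 0" "snd A > 0"
    and A_eq1: "fst A powr (a1' - a1) * snd A powr (b1' - b1) = \<epsilon>^2"
    and A_eq2: "fst A powr (a2' - a2) * snd A powr (b2' - b2) = 1 / \<epsilon>^2"
    and D_pos: "fst D > 0" "snd D > 0"
    and D_eq1: "fst D powr (a1' - a1) * snd D powr (b1' - b1) = \<epsilon>^2"
    and D_eq2: "fst D powr (a2' - a2) * snd D powr (b2' - b2) = \<epsilon>^2"
    and X0: "X 0 = D"
    and X_pos: "\<And>t. t \<ge> 0 \<Longrightarrow> fst (X t) > 0 \<and> snd (X t) > 0"
    and X_ode: "\<And>t. t \<ge> 0 \<Longrightarrow>
       (X has_vector_derivative mass_action_field a1 b1 a1' b1' a2 b2 a2' b2' \<epsilon> (X t))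
         (at t within {0..})"
    and Jac: "(mass_action_field a1 b1 a1' b1' a2 b2 a2' b2' \<epsilon> has_derivative J) (at A)"
begin

abbreviation "v1x \<equiv> a1' - a1"
abbreviation "v1y \<equiv> b1' - b1"
abbreviation "v2x \<equiv> a2' - a2"
abbreviation "v2y \<equiv> b2' - b2"
abbreviation "F \<equiv> mass_action_field a1 b1 a1' b1' a2 b2 a2' b2' \<epsilon>"

definition "r1 p = \<epsilon> * fst p powr a1 * snd p powr b1 - (1/\<epsilon>) * fst p powr a1' * snd p powr b1'"
definition "r2 p = (1/\<epsilon>) * fst p powr a2 * snd p powr b2 - \<epsilon> * fst p powr a2' * snd p powr b2'"
definition "s1 p = v1x * ln (fst p) + v1y * ln (snd p) - 2 * ln \<epsilon>"
definition "s2 p = v2x * ln (fst p) + v2y * ln (snd p) + 2 * ln \<epsilon>"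
definition "m1 = - (v1y / v1x)"
definition "m2 = - (v2y / v2x)"
definition "pos p \<longleftrightarrow> fst p > 0 \<and> snd p > 0"

lemma F_eq: "F p = (r1 p * v1x + r2 p * v2x, r1 p * v1y + r2 p * v2y)"
  unfolding mass_action_field_def r1_def r2_def Let_def by simp

lemma v1x_nz: "v1x \<noteq> 0" using slope1 by auto
lemma v2x_nz: "v2x \<noteq> 0" using slope2 by auto
lemma m1_bounds: "0 < m1" "m1 < 1" using slope1 unfolding m1_def by auto
lemma m2_bounds: "1 < m2" using slope2 unfolding m2_def by auto
lemma v1y_eq: "v1y = - m1 * v1x" using v1x_nz unfolding m1_def by simp
lemma v2y_eq: "v2y = - m2 * v2x" using v2x_nz unfolding m2_def by simp

lemma exp2ln: "exp (2 * ln \<epsilon>) = \<epsilon>^2"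
proof -
  have "ln (\<epsilon>^2) = 2 * ln \<epsilon>" using eps by (simp add: ln_realpow)
  then show ?thesis using eps by (metis exp_ln zero_less_power)
qed

lemma r1_eq: assumes "pos p"
  shows "r1 p = \<epsilon> * fst p powr a1 * snd p powr b1 * (1 - exp (s1 p))"
proof -
  obtain x y where p: "p = (x, y)" "x > 0" "y > 0" using assms unfolding pos_def by (cases p) auto
  have e: "exp (s1 p) = exp (v1x * ln x) * exp (v1y * ln y) / \<epsilon>^2"
    unfolding s1_def p using exp2ln by (simp add: exp_add exp_diff)
  have "x powr a1' = x powr a1 * exp (v1x * ln x)"
  proof -
    have "a1' * ln x = a1 * ln x + v1x * ln x" by (simp add: algebra_simps)
    then have "exp (a1' * ln x) = exp (a1 * ln x) * exp (v1x * ln x)" by (simp add: exp_add)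
    then show ?thesis using p by (simp add: powr_def)
  qed
  moreover have "y powr b1' = y powr b1 * exp (v1y * ln y)"
  proof -
    have "b1' * ln y = b1 * ln y + v1y * ln y" by (simp add: algebra_simps)
    then have "exp (b1' * ln y) = exp (b1 * ln y) * exp (v1y * ln y)" by (simp add: exp_add)
    then show ?thesis using p by (simp add: powr_def)
  qed
  ultimately show ?thesis unfolding r1_def e using p eps
    by (simp add: field_simps power2_eq_square)
qed

lemma r2_eq: assumes "pos p"
  shows "r2 p = (1/\<epsilon>) * fst p powr a2 * snd p powr b2 * (1 - exp (s2 p))"
proof -
  obtain x y where p: "p = (x, y)" "x > 0" "y > 0" using assms unfolding pos_def by (cases p) auto
  have e: "exp (s2 p) = exp (v2x * ln x) * exp (v2y * ln y) * \<epsilon>^2"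
    unfolding s2_def p using exp2ln by (simp add: exp_add exp_diff)
  have "x powr a2' = x powr a2 * exp (v2x * ln x)"
  proof -
    have "a2' * ln x = a2 * ln x + v2x * ln x" by (simp add: algebra_simps)
    then have "exp (a2' * ln x) = exp (a2 * ln x) * exp (v2x * ln x)" by (simp add: exp_add)
    then show ?thesis using p by (simp add: powr_def)
  qed
  moreover have "y powr b2' = y powr b2 * exp (v2y * ln y)"
  proof -
    have "b2' * ln y = b2 * ln y + v2y * ln y" by (simp add: algebra_simps)
    then have "exp (b2' * ln y) = exp (b2 * ln y) * exp (v2y * ln y)" by (simp add: exp_add)
    then show ?thesis using p by (simp add: powr_def)
  qed
  ultimately show ?thesis unfolding r2_def e using p eps
    by (simp add: field_simps power2_eq_square)
qed

lemma pref1_pos: "pos p \<Longrightarrow> \<epsilon> * fst p powr a1 * snd p powr b1 > 0"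
  using eps unfolding pos_def by simp
lemma pref2_pos: "pos p \<Longrightarrow> (1/\<epsilon>) * fst p powr a2 * snd p powr b2 > 0"
  using eps unfolding pos_def by simp

lemma one_minus_exp_pos: "(1 - exp s > 0) \<longleftrightarrow> s < 0" for s :: real
  by simp
lemma one_minus_exp_neg: "(1 - exp s < 0) \<longleftrightarrow> s > 0" for s :: real
  by simp

lemma sgn_help: fixes s :: real assumes "c > 0"
  shows "c * (1 - exp s) > 0 \<longleftrightarrow> s < 0" "c * (1 - exp s) < 0 \<longleftrightarrow> s > 0" "c * (1 - exp s) = 0 \<longleftrightarrow> s = 0"
  using assms by (auto simp: zero_less_mult_iff mult_less_0_iff)

lemma r1_sign: assumes "pos p"
  shows "r1 p > 0 \<longleftrightarrow> s1 p < 0" "r1 p < 0 \<longleftrightarrow> s1 p > 0" "r1 p = 0 \<longleftrightarrow> s1 p = 0"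
  unfolding r1_eq[OF assms] by (rule sgn_help[OF pref1_pos[OF assms]])+

lemma r2_sign: assumes "pos p"
  shows "r2 p > 0 \<longleftrightarrow> s2 p < 0" "r2 p < 0 \<longleftrightarrow> s2 p > 0" "r2 p = 0 \<longleftrightarrow> s2 p = 0"
  unfolding r2_eq[OF assms] by (rule sgn_help[OF pref2_pos[OF assms]])+

lemma A_pos': "pos A" using A_pos by (simp add: pos_def)
lemma D_pos': "pos D" using D_pos by (simp add: pos_def)

lemma ln_pp: "x > 0 \<Longrightarrow> y > 0 \<Longrightarrow> ln (x powr a * y powr b) = a * ln x + b * ln y" for x y a b :: real
  by (simp add: ln_mult ln_powr)

lemma s1_A: "s1 A = 0"
proof -
  have "ln (fst A powr v1x * snd A powr v1y) = ln (\<epsilon>^2)" using A_eq1 by simp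
  then show ?thesis using A_pos eps unfolding s1_def by (simp add: ln_pp ln_realpow)
qed
lemma s2_A: "s2 A = 0"
proof -
  have "ln (fst A powr v2x * snd A powr v2y) = ln (1 / \<epsilon>^2)" using A_eq2 by simp
  then show ?thesis using A_pos eps unfolding s2_def by (simp add: ln_pp ln_realpow ln_div)
qed
lemma s1_D: "s1 D = 0"
proof -
  have "ln (fst D powr v1x * snd D powr v1y) = ln (\<epsilon>^2)" using D_eq1 by simp
  then show ?thesis using D_pos eps unfolding s1_def by (simp add: ln_pp ln_realpow)
qed
lemma s2_D: "s2 D < 0"
proof -
  have "ln (fst D powr v2x * snd D powr v2y) = ln (\<epsilon>^2)" using D_eq2 by simp
  then have "s2 D = 4 * ln \<epsilon>" using D_pos eps unfolding s2_def by (simp add: ln_pp ln_realpow)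
  then show ?thesis using eps by simp
qed

lemma F_A: "F A = 0"
  using r1_sign(3)[OF A_pos'] r2_sign(3)[OF A_pos'] s1_A s2_A by (simp add: F_eq zero_prod_def)

lemma D_ne_A: "D \<noteq> A" using s2_D s2_A by auto

lemma det_nz: "v1x * v2y - v1y * v2x \<noteq> 0"
proof -
  have "v1x * v2y - v1y * v2x = v1x * v2x * (m1 - m2)"
    by (simp add: v1y_eq v2y_eq algebra_simps)
  then show ?thesis using v1x_nz v2x_nz m1_bounds m2_bounds by simp
qed

lemma s_zero_imp_A: assumes "pos p" "s1 p = 0" "s2 p = 0" shows "p = A"
proof -
  define L where "L = ln (fst p) - ln (fst A)"
  define M where "M = ln (snd p) - ln (snd A)"
  have e1: "v1x * L + v1y * M = 0" using assms(2) s1_A unfolding s1_def L_def M_def by (simp add: algebra_simps)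
  have e2: "v2x * L + v2y * M = 0" using assms(3) s2_A unfolding s2_def L_def M_def by (simp add: algebra_simps)
  have "L * (v1x * v2y - v1y * v2x) = v2y * (v1x * L + v1y * M) - v1y * (v2x * L + v2y * M)"
    by (simp add: algebra_simps)
  then have "L = 0" using e1 e2 det_nz by simp
  have "M * (v1x * v2y - v1y * v2x) = v1x * (v2x * L + v2y * M) - v2x * (v1x * L + v1y * M)"
    by (simp add: algebra_simps)
  then have "M = 0" using e1 e2 det_nz by simp
  show ?thesis using \<open>L = 0\<close> \<open>M = 0\<close> assms(1) A_pos unfolding L_def M_def pos_def
    by (simp add: prod_eq_iff)
qed

lemma Xpos: "t \<ge> 0 \<Longrightarrow> pos (X t)" using X_pos by (simp add: pos_def)

lemma Xder1: "t \<ge> 0 \<Longrightarrow> ((\<lambda>t. fst (X t)) has_real_derivative fst (F (X t))) (at t within {0..})"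
  using bounded_linear.has_vector_derivative[OF bounded_linear_fst X_ode]
  by (simp add: has_real_derivative_iff_has_vector_derivative)
lemma Xder2: "t \<ge> 0 \<Longrightarrow> ((\<lambda>t. snd (X t)) has_real_derivative snd (F (X t))) (at t within {0..})"
  using bounded_linear.has_vector_derivative[OF bounded_linear_snd X_ode]
  by (simp add: has_real_derivative_iff_has_vector_derivative)

lemma Xcont_at: "t \<ge> 0 \<Longrightarrow> continuous (at t within {0..}) X"
  using has_vector_derivative_continuous[OF X_ode] by simp

lemma Xcont: "continuous_on {0..} X"
  unfolding continuous_on_eq_continuous_within using Xcont_at by auto

lemma F_lin_bound: "\<exists>L>0. \<exists>r>0. \<forall>p. norm (p - A) < r \<longrightarrow> norm (F p) \<le> L * norm (p - A)"
proof -
  have bl: "bounded_linear J" and ap: "\<forall>e>0. \<exists>d>0. \<forall>y. norm (y - A) < d \<longrightarrow> norm (F y - F A - J (y - A)) \<le> e * norm (y - A)"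
    using Jac unfolding has_derivative_at_alt by auto
  obtain K where K: "K > 0" "\<And>h. norm (J h) \<le> norm h * K" using bounded_linear.pos_bounded[OF bl] by blast
  obtain r where r: "r > 0" "\<And>y. norm (y - A) < r \<Longrightarrow> norm (F y - F A - J (y - A)) \<le> 1 * norm (y - A)"
    using ap by (meson zero_less_one)
  show ?thesis
  proof (intro exI conjI allI impI)
    fix p assume p: "norm (p - A) < r"
    have "norm (F p) \<le> norm (F p - J (p - A)) + norm (J (p - A))"
      by (metis add_diff_cancel_left' diff_add_cancel norm_triangle_ineq)
    also have "\<dots> \<le> norm (p - A) + norm (p - A) * K" using r(2)[OF p] K(2)[of "p - A"] F_A by simp
    finally show "norm (F p) \<le> (K + 1) * norm (p - A)" by (simp add: algebra_simps)
  qed (use K r in auto)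
qed

lemma X_ne_A: assumes t: "t \<ge> 0" shows "X t \<noteq> A"
proof
  assume XA: "X t = A"
  obtain L r where L: "L > 0" "r > 0" "\<And>p. norm (p - A) < r \<Longrightarrow> norm (F p) \<le> L * norm (p - A)"
    using F_lin_bound by blast
  define S where "S = {0..} \<inter> X -` {A}"
  have cS: "closed S" unfolding S_def by (rule continuous_closed_preimage[OF Xcont]) auto
  have neS: "S \<noteq> {}" using XA t unfolding S_def by auto
  have bS: "bdd_below S" unfolding S_def by (rule bdd_belowI[of _ 0]) auto
  define T where "T = Inf S"
  have TS: "T \<in> S" unfolding T_def by (rule closed_contains_Inf[OF neS bS cS])
  have T0: "T \<ge> 0" and XT: "X T = A" using TS unfolding S_def by auto
  have "T \<noteq> 0" using XT X0 D_ne_A by auto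
  with T0 have Tp: "T > 0" by simp
  have "(X \<longlongrightarrow> A) (at T within {0..})" using Xcont_at[OF T0] XT by (simp add: continuous_within)
  then have "eventually (\<lambda>s. dist (X s) A < r) (at T within {0..})" using L(2) by (rule tendstoD)
  then obtain \<delta> where \<delta>: "\<delta> > 0" "\<forall>s\<in>{0..}. s \<noteq> T \<and> dist s T < \<delta> \<longrightarrow> dist (X s) A < r"
    unfolding eventually_at by blast
  define s0 where "s0 = max (T - \<delta>/2) (T/2)"
  have s0: "0 \<le> s0" "s0 < T" "dist s0 T < \<delta>" using Tp \<delta>(1) unfolding s0_def dist_real_def by auto
  define N where "N s = exp (2 * L * s) * ((fst (X s) - fst A)^2 + (snd (X s) - snd A)^2)" for s
  define N' where "N' s = exp (2 * L * s) * (2 * L * ((fst (X s) - fst A)^2 + (snd (X s) - snd A)^2)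
     + 2 * ((fst (X s) - fst A) * fst (F (X s)) + (snd (X s) - snd A) * snd (F (X s))))" for s
  have "(- N) T \<le> (- N) s0"
  proof (rule deriv_nonpos_mono[where a = 0 and g = "- N" and s = s0 and s' = T and g' = "\<lambda>s. - N' s"])
    fix s :: real assume s: "0 \<le> s"
    show "((- N) has_real_derivative - N' s) (at s within {0..})"
      unfolding N_def N'_def fun_Compl_def
      by (rule derivative_eq_intros Xder1[OF s] Xder2[OF s] refl | simp)+ (simp add: algebra_simps)
  next
    fix s assume s: "s0 \<le> s" "s \<le> T"
    have sT: "s \<in> {0..}" using s s0 by auto
    have "norm (X s - A) < r"
    proof (cases "s = T")
      case True then show ?thesis using XT L by simp
    next
      case False
      then show ?thesis using \<delta>(2) sT s s0 by (auto simp: dist_norm dist_real_def)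
    qed
    then have Fb: "norm (F (X s)) \<le> L * norm (X s - A)" by (rule L(3))
    have ns: "(norm (X s - A))^2 = (fst (X s) - fst A)^2 + (snd (X s) - snd A)^2"
      by (simp add: norm_sq_pair)
    have "\<bar>(fst (X s) - fst A) * fst (F (X s)) + (snd (X s) - snd A) * snd (F (X s))\<bar>
        \<le> norm (X s - A) * norm (F (X s))" using cs_pair[of "X s - A" "F (X s)"] by simp
    also have "\<dots> \<le> norm (X s - A) * (L * norm (X s - A))" by (rule mult_left_mono[OF Fb]) simp
    also have "\<dots> = L * (norm (X s - A))^2" by (simp add: power2_eq_square)
    finally have "\<bar>(fst (X s) - fst A) * fst (F (X s)) + (snd (X s) - snd A) * snd (F (X s))\<bar>
        \<le> L * ((fst (X s) - fst A)^2 + (snd (X s) - snd A)^2)" by (simp only: ns)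
    then have "0 \<le> 2 * L * ((fst (X s) - fst A)^2 + (snd (X s) - snd A)^2)
     + 2 * ((fst (X s) - fst A) * fst (F (X s)) + (snd (X s) - snd A) * snd (F (X s)))"
      by (rule abs_helper)
    then show "- N' s \<le> 0" unfolding N'_def by simp
  qed (use s0 in auto)
  then have "N s0 \<le> 0" using XT unfolding N_def by simp
  then have "(fst (X s0) - fst A)^2 + (snd (X s0) - snd A)^2 \<le> 0" unfolding N_def
    by (simp add: mult_le_0_iff)
  then have "(fst (X s0) - fst A)^2 = 0" "(snd (X s0) - snd A)^2 = 0"
    using zero_le_power2[of "fst (X s0) - fst A"] zero_le_power2[of "snd (X s0) - snd A"] by linarith+
  then have "X s0 = A" by (simp add: prod_eq_iff)
  then have "s0 \<in> S" using s0 unfolding S_def by auto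
  then have "T \<le> s0" unfolding T_def using bS by (rule cInf_lower)
  then show False using s0 by simp
qed

definition "sig = (if v1x * v2x > 0 then 1 else -1 :: real)"
definition "G11 p = v1x^2 / fst p + v1y^2 / snd p"
definition "G12 p = v1x * v2x / fst p + v1y * v2y / snd p"
definition "G22 p = v2x^2 / fst p + v2y^2 / snd p"

lemma sig_sq: "sig * sig = 1" unfolding sig_def by simp
lemma sig_v: "sig * (v1x * v2x) > 0"
  using v1x_nz v2x_nz unfolding sig_def by (auto simp: mult_less_0_iff not_less zero_less_mult_iff)

lemma sig_G12: assumes "pos p" shows "sig * G12 p > 0"
proof -
  have "G12 p = (v1x * v2x) * (1 / fst p + m1 * m2 / snd p)"
    unfolding G12_def by (simp add: v1y_eq v2y_eq field_simps)
  moreover have "1 / fst p + m1 * m2 / snd p > 0" using assms m1_bounds m2_bounds unfolding pos_def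
    by (intro add_pos_pos) auto
  ultimately show ?thesis using sig_v by (simp add: mult.assoc[symmetric])
qed

lemma s1der: assumes t: "t \<ge> 0"
  shows "((\<lambda>t. s1 (X t)) has_real_derivative (r1 (X t) * G11 (X t) + r2 (X t) * G12 (X t))) (at t within {0..})"
proof -
  have p: "fst (X t) > 0" "snd (X t) > 0" using X_pos[OF t] by auto
  have L1: "((\<lambda>t. ln (fst (X t))) has_real_derivative fst (F (X t)) / fst (X t)) (at t within {0..})"
    using p(1) by (auto intro!: derivative_eq_intros Xder1[OF t] simp: field_simps)
  have L2: "((\<lambda>t. ln (snd (X t))) has_real_derivative snd (F (X t)) / snd (X t)) (at t within {0..})"
    using p(2) by (auto intro!: derivative_eq_intros Xder2[OF t] simp: field_simps)
  have "((\<lambda>t. s1 (X t)) has_real_derivative (v1x * (fst (F (X t)) / fst (X t)) + v1y * (snd (F (X t)) / snd (X t)))) (at t within {0..})"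
    unfolding s1_def using DERIV_diff[OF DERIV_add[OF DERIV_cmult[OF L1, of "v1x"] DERIV_cmult[OF L2, of "v1y"]] DERIV_const[of "2 * ln \<epsilon>"]]
    by simp
  moreover have "v1x * (fst (F (X t)) / fst (X t)) + v1y * (snd (F (X t)) / snd (X t)) = r1 (X t) * G11 (X t) + r2 (X t) * G12 (X t)"
    unfolding F_eq G11_def G12_def using p by (simp add: field_simps power2_eq_square)
  ultimately show ?thesis by simp
qed

lemma s2der: assumes t: "t \<ge> 0"
  shows "((\<lambda>t. s2 (X t)) has_real_derivative (r1 (X t) * G12 (X t) + r2 (X t) * G22 (X t))) (at t within {0..})"
proof -
  have p: "fst (X t) > 0" "snd (X t) > 0" using X_pos[OF t] by auto
  have L1: "((\<lambda>t. ln (fst (X t))) has_real_derivative fst (F (X t)) / fst (X t)) (at t within {0..})"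
    using p(1) by (auto intro!: derivative_eq_intros Xder1[OF t] simp: field_simps)
  have L2: "((\<lambda>t. ln (snd (X t))) has_real_derivative snd (F (X t)) / snd (X t)) (at t within {0..})"
    using p(2) by (auto intro!: derivative_eq_intros Xder2[OF t] simp: field_simps)
  have "((\<lambda>t. s2 (X t)) has_real_derivative (v2x * (fst (F (X t)) / fst (X t)) + v2y * (snd (F (X t)) / snd (X t)))) (at t within {0..})"
    unfolding s2_def using DERIV_add[OF DERIV_add[OF DERIV_cmult[OF L1, of "v2x"] DERIV_cmult[OF L2, of "v2y"]] DERIV_const[of "2 * ln \<epsilon>"]]
    by simp
  moreover have "v2x * (fst (F (X t)) / fst (X t)) + v2y * (snd (F (X t)) / snd (X t)) = r1 (X t) * G12 (X t) + r2 (X t) * G22 (X t)"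
    unfolding F_eq G22_def G12_def using p by (simp add: field_simps power2_eq_square)
  ultimately show ?thesis by simp
qed

definition "Qinv t \<longleftrightarrow> sig * s1 (X t) \<ge> 0 \<and> s2 (X t) \<le> 0"

lemma sig_r1: assumes "pos p" "sig * s1 p > 0" shows "sig * r1 p < 0"
  using assms(2) r1_sign[OF assms(1)] unfolding sig_def
  by (auto split: if_splits)

lemma invariance: assumes t: "t \<ge> 0" shows "Qinv t"
proof (rule ccontr)
  assume nQ: "\<not> Qinv t"
  define E where "E = {t. t \<ge> 0 \<and> \<not> Qinv t}"
  have neE: "E \<noteq> {}" using nQ t unfolding E_def by auto
  have bE: "bdd_below E" unfolding E_def by (rule bdd_belowI[of _ 0]) auto
  define T where "T = Inf E"
  have T0: "T \<ge> 0" unfolding T_def using neE by (intro cInf_greatest) (auto simp: E_def)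
  have before: "Qinv s" if "0 \<le> s" "s < T" for s
  proof (rule ccontr)
    assume "\<not> Qinv s"
    then have "s \<in> E" using that unfolding E_def by auto
    then have "T \<le> s" unfolding T_def using bE by (rule cInf_lower)
    then show False using that by simp
  qed
  define f1 where "f1 t = sig * s1 (X t)" for t
  define f2 where "f2 t = - s2 (X t)" for t
  define d1 where "d1 = sig * (r1 (X T) * G11 (X T) + r2 (X T) * G12 (X T))"
  define d2 where "d2 = - (r1 (X T) * G12 (X T) + r2 (X T) * G22 (X T))"
  have D1: "(f1 has_real_derivative d1) (at T within {0..})"
    unfolding f1_def d1_def using DERIV_cmult[OF s1der[OF T0], of sig] by simp
  have D2: "(f2 has_real_derivative d2) (at T within {0..})"
    unfolding f2_def d2_def using DERIV_minus[OF s2der[OF T0]] by simp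
  have QT: "Qinv T"
  proof (cases "T = 0")
    case True
    then show ?thesis using X0 s1_D s2_D unfolding Qinv_def by simp
  next
    case False
    with T0 have Tp: "T > 0" by simp
    have "f1 T \<ge> 0"
      by (rule left_lim_nonneg[OF DERIV_continuous[OF D1] Tp]) (use before in \<open>auto simp: f1_def Qinv_def\<close>)
    moreover have "f2 T \<ge> 0"
      by (rule left_lim_nonneg[OF DERIV_continuous[OF D2] Tp]) (use before in \<open>auto simp: f2_def Qinv_def\<close>)
    ultimately show ?thesis unfolding Qinv_def f1_def f2_def by simp
  qed
  have pT: "pos (X T)" using Xpos[OF T0] .
  have nb: "\<not> (f1 T = 0 \<and> f2 T = 0)"
  proof
    assume "f1 T = 0 \<and> f2 T = 0"
    then have "s1 (X T) = 0" "s2 (X T) = 0" using sig_sq unfolding f1_def f2_def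
      by (auto simp: sig_def split: if_splits)
    then have "X T = A" by (rule s_zero_imp_A[OF pT])
    then show False using X_ne_A[OF T0] by simp
  qed
  have f1T: "f1 T \<ge> 0" and f2T: "f2 T \<ge> 0" using QT unfolding Qinv_def f1_def f2_def by auto
  have c1: "d1 > 0" if "f1 T = 0"
  proof -
    have "s1 (X T) = 0" using that sig_sq unfolding f1_def by (auto simp: sig_def split: if_splits)
    then have "r1 (X T) = 0" using r1_sign(3)[OF pT] by simp
    moreover have "s2 (X T) < 0" using that nb f2T unfolding f2_def by auto
    then have "r2 (X T) > 0" using r2_sign(1)[OF pT] by simp
    ultimately have "d1 = r2 (X T) * (sig * G12 (X T))" unfolding d1_def by (simp add: algebra_simps)
    then show ?thesis using sig_G12[OF pT] \<open>r2 (X T) > 0\<close> by simp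
  qed
  have c2: "d2 > 0" if "f2 T = 0"
  proof -
    have "s2 (X T) = 0" using that unfolding f2_def by simp
    then have "r2 (X T) = 0" using r2_sign(3)[OF pT] by simp
    moreover have "f1 T > 0" using that nb f1T by auto
    then have "sig * r1 (X T) < 0" using sig_r1[OF pT] unfolding f1_def by simp
    ultimately have "d2 = - ((sig * r1 (X T)) * (sig * G12 (X T)))"
      unfolding d2_def using sig_sq by (simp add: algebra_simps)
    then show ?thesis using \<open>sig * r1 (X T) < 0\<close> sig_G12[OF pT]
      by (simp add: mult_neg_pos)
  qed
  obtain \<delta>1 where \<delta>1: "\<delta>1 > 0" "\<forall>h. 0 < h \<and> h < \<delta>1 \<longrightarrow> f1 (T + h) > 0"
    using right_pos[OF D1 T0 f1T c1] by blast
  obtain \<delta>2 where \<delta>2: "\<delta>2 > 0" "\<forall>h. 0 < h \<and> h < \<delta>2 \<longrightarrow> f2 (T + h) > 0"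
    using right_pos[OF D2 T0 f2T c2] by blast
  define \<delta> where "\<delta> = min \<delta>1 \<delta>2"
  have "Inf E < T + \<delta>" using \<delta>1 \<delta>2 unfolding T_def \<delta>_def by simp
  then obtain e where e: "e \<in> E" "e < T + \<delta>" using cInf_less_iff[OF neE bE] by blast
  have "T \<le> e" unfolding T_def using e(1) bE by (rule cInf_lower)
  show False
  proof (cases "e = T")
    case True then show False using e(1) QT unfolding E_def by simp
  next
    case False
    with \<open>T \<le> e\<close> have "0 < e - T" "e - T < \<delta>1" "e - T < \<delta>2" using e unfolding \<delta>_def by auto
    then have "f1 (T + (e - T)) > 0" "f2 (T + (e - T)) > 0" using \<delta>1(2) \<delta>2(2) by blast+
    then have "Qinv e" unfolding f1_def f2_def Qinv_def by simp
    then show False using e(1) unfolding E_def by simp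
  qed
qed

lemma Q_r: assumes t: "t \<ge> 0" shows "sig * r1 (X t) \<le> 0" "r2 (X t) \<ge> 0"
proof -
  have p: "pos (X t)" using Xpos[OF t] .
  have Q: "sig * s1 (X t) \<ge> 0" "s2 (X t) \<le> 0" using invariance[OF t] unfolding Qinv_def by auto
  show "sig * r1 (X t) \<le> 0"
  proof (cases "sig = 1")
    case True
    then have "\<not> s1 (X t) < 0" using Q by simp
    then have "\<not> r1 (X t) > 0" using r1_sign(1)[OF p] by simp
    then show ?thesis using True by simp
  next
    case False
    then have sm: "sig = -1" unfolding sig_def by (simp split: if_splits)
    then have "\<not> s1 (X t) > 0" using Q by simp
    then have "\<not> r1 (X t) < 0" using r1_sign(2)[OF p] by simp
    then show ?thesis using sm by simp
  qed
  have "\<not> s2 (X t) > 0" using Q by simp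
  then show "r2 (X t) \<ge> 0" using r2_sign(2)[OF p] by simp
qed

lemma sum_der: "t \<ge> 0 \<Longrightarrow> ((\<lambda>t. fst (X t) + snd (X t)) has_real_derivative
   (r1 (X t) * (v1x * (1 - m1)) + r2 (X t) * (v2x * (1 - m2)))) (at t within {0..})"
  using DERIV_add[OF Xder1 Xder2] unfolding F_eq by (simp add: v1y_eq v2y_eq algebra_simps)

definition "S0 = fst D + snd D"

lemma sum_mono_pos: assumes "v2x > 0" "t \<ge> 0" shows "fst (X t) + snd (X t) \<le> S0"
proof -
  have "(\<lambda>t. fst (X t) + snd (X t)) t \<le> (\<lambda>t. fst (X t) + snd (X t)) 0"
  proof (rule deriv_nonpos_mono[where a = 0, OF sum_der])
    fix s :: real assume s: "0 \<le> s" "s \<le> t"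
    have sv: "sig * v1x > 0" using sig_v assms(1) by (simp add: zero_less_mult_iff mult.assoc[symmetric])
    have "(sig * r1 (X s)) * (sig * v1x) = (sig * sig) * (r1 (X s) * v1x)" by (simp only: mult_ac)
    then have "r1 (X s) * v1x = (sig * r1 (X s)) * (sig * v1x)" using sig_sq by simp
    also have "\<dots> \<le> 0" using Q_r(1)[OF s(1)] sv by (simp add: mult_nonpos_nonneg)
    finally have a: "r1 (X s) * v1x * (1 - m1) \<le> 0" using m1_bounds by (simp add: mult_nonpos_nonneg)
    have b: "r2 (X s) * (v2x * (1 - m2)) \<le> 0" using Q_r(2)[OF s(1)] assms(1) m2_bounds
      by (simp add: mult_nonneg_nonpos)
    show "r1 (X s) * (v1x * (1 - m1)) + r2 (X s) * (v2x * (1 - m2)) \<le> 0" using a b by (simp add: mult.assoc)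
  qed (use assms in auto)
  then show ?thesis using X0 unfolding S0_def by simp
qed

lemma sum_mono_neg: assumes "v2x < 0" "t \<ge> 0" shows "fst (X t) + snd (X t) \<ge> S0"
proof -
  have "(\<lambda>t. - (fst (X t) + snd (X t))) t \<le> (\<lambda>t. - (fst (X t) + snd (X t))) 0"
  proof (rule deriv_nonpos_mono[where a = 0, OF DERIV_minus[OF sum_der]])
    fix s :: real assume s: "0 \<le> s" "s \<le> t"
    have sv: "sig * v1x < 0" using sig_v assms(1) by (simp add: zero_less_mult_iff mult.assoc[symmetric])
    have "(sig * r1 (X s)) * (sig * v1x) = (sig * sig) * (r1 (X s) * v1x)" by (simp only: mult_ac)
    then have "r1 (X s) * v1x = (sig * r1 (X s)) * (sig * v1x)" using sig_sq by simp
    also have "\<dots> \<ge> 0" using Q_r(1)[OF s(1)] sv by (simp add: mult_nonpos_nonpos)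
    finally have a: "r1 (X s) * v1x * (1 - m1) \<ge> 0" using m1_bounds by simp
    have b: "r2 (X s) * (v2x * (1 - m2)) \<ge> 0" using Q_r(2)[OF s(1)] assms(1) m2_bounds
      by (simp add: mult_nonpos_nonpos)
    show "- (r1 (X s) * (v1x * (1 - m1)) + r2 (X s) * (v2x * (1 - m2))) \<le> 0" using a b by (simp add: mult.assoc)
  qed (use assms in auto)
  then show ?thesis using X0 unfolding S0_def by simp
qed

definition "c1 = 2 * sig * ln \<epsilon> / (sig * v1x)"
definition "c2 = - 2 * ln \<epsilon> / v2x"

lemma s1_form: "pos p \<Longrightarrow> s1 p = v1x * (ln (fst p) - m1 * ln (snd p)) - 2 * ln \<epsilon>"
  unfolding s1_def by (simp add: v1y_eq algebra_simps)
lemma s2_form: "pos p \<Longrightarrow> s2 p = v2x * (ln (fst p) - m2 * ln (snd p)) + 2 * ln \<epsilon>"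
  unfolding s2_def by (simp add: v2y_eq algebra_simps)

lemma log_ineqs: assumes t: "t \<ge> 0"
  defines "lx \<equiv> ln (fst (X t))" and "ly \<equiv> ln (snd (X t))"
  shows "v2x > 0 \<Longrightarrow> lx - m1 * ly \<ge> c1 \<and> lx - m2 * ly \<le> c2"
    and "v2x < 0 \<Longrightarrow> lx - m1 * ly \<le> c1 \<and> lx - m2 * ly \<ge> c2"
proof -
  have p: "pos (X t)" using Xpos[OF t] .
  have Q: "sig * s1 (X t) \<ge> 0" "s2 (X t) \<le> 0" using invariance[OF t] unfolding Qinv_def by auto
  have e1: "(sig * v1x) * (lx - m1 * ly) \<ge> 2 * sig * ln \<epsilon>"
    using Q(1) unfolding s1_form[OF p] lx_def ly_def by (simp add: algebra_simps)
  have e2: "v2x * (lx - m2 * ly) \<le> - 2 * ln \<epsilon>"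
    using Q(2) unfolding s2_form[OF p] lx_def ly_def by (simp add: algebra_simps)
  show "v2x > 0 \<Longrightarrow> lx - m1 * ly \<ge> c1 \<and> lx - m2 * ly \<le> c2"
  proof -
    assume v: "v2x > 0"
    have sv: "sig * v1x > 0" using sig_v v by (simp add: zero_less_mult_iff mult.assoc[symmetric])
    have "c1 \<le> lx - m1 * ly" unfolding c1_def by (rule div_le_pos[OF sv e1])
    moreover have "lx - m2 * ly \<le> c2" unfolding c2_def by (rule le_div_pos[OF v e2])
    ultimately show ?thesis by simp
  qed
  show "v2x < 0 \<Longrightarrow> lx - m1 * ly \<le> c1 \<and> lx - m2 * ly \<ge> c2"
  proof -
    assume v: "v2x < 0"
    have sv: "sig * v1x < 0" using sig_v v by (simp add: zero_less_mult_iff mult.assoc[symmetric])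
    have "lx - m1 * ly \<le> c1" unfolding c1_def by (rule le_div_neg[OF sv e1])
    moreover have "c2 \<le> lx - m2 * ly" unfolding c2_def by (rule div_le_neg[OF v e2])
    ultimately show ?thesis by simp
  qed
qed

lemma S0_pos: "S0 > 0" using D_pos unfolding S0_def by simp

lemma box: "\<exists>lo hi. 0 < lo \<and> (\<forall>t\<ge>0. lo \<le> fst (X t) \<and> fst (X t) \<le> hi \<and> lo \<le> snd (X t) \<and> snd (X t) \<le> hi)"
proof (cases "v2x > 0")
  case True
  define Ly where "Ly = (c1 - c2) / (m2 - m1)"
  define Lx where "Lx = c1 + m1 * Ly"
  have dm: "m2 - m1 > 0" using m1_bounds m2_bounds by simp
  show ?thesis
  proof (intro exI conjI allI impI)
    show "0 < min (exp Lx) (exp Ly)" by simp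
    fix t :: real assume t: "t \<ge> 0"
    define lx where "lx = ln (fst (X t))"
    define ly where "ly = ln (snd (X t))"
    have p: "fst (X t) > 0" "snd (X t) > 0" using X_pos[OF t] by auto
    have ex: "exp lx = fst (X t)" "exp ly = snd (X t)" using p unfolding lx_def ly_def by auto
    have li: "lx - m1 * ly \<ge> c1" "lx - m2 * ly \<le> c2" using log_ineqs(1)[OF t True] unfolding lx_def ly_def by auto
    have "(m2 - m1) * ly = m2 * ly - m1 * ly" by (simp add: algebra_simps)
    then have "c1 - c2 \<le> (m2 - m1) * ly" using li by linarith
    then have lyb: "Ly \<le> ly" unfolding Ly_def by (rule div_le_pos[OF dm])
    have "m1 * Ly \<le> m1 * ly" using lyb m1_bounds by (intro mult_left_mono) auto
    then have lxb: "Lx \<le> lx" unfolding Lx_def using li by linarith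
    have sb: "fst (X t) + snd (X t) \<le> S0" using sum_mono_pos[OF True t] .
    show "min (exp Lx) (exp Ly) \<le> fst (X t)" using lxb ex[symmetric] by (simp add: min.coboundedI1)
    show "min (exp Lx) (exp Ly) \<le> snd (X t)" using lyb ex[symmetric] by (simp add: min.coboundedI2)
    show "fst (X t) \<le> S0" using sb p by simp
    show "snd (X t) \<le> S0" using sb p by simp
  qed
next
  case False
  then have v: "v2x < 0" using v2x_nz by simp
  define Uy where "Uy = (c1 - c2) / (m2 - m1)"
  define Ux where "Ux = c1 + m1 * Uy"
  define Ly where "Ly = min 0 (ln (S0 / (exp c1 + 1)) / m1)"
  define Lx where "Lx = c2 + m2 * Ly"
  have dm: "m2 - m1 > 0" using m1_bounds m2_bounds by simp
  show ?thesis
  proof (intro exI conjI allI impI)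
    show "0 < min (exp Lx) (exp Ly)" by simp
    fix t :: real assume t: "t \<ge> 0"
    define lx where "lx = ln (fst (X t))"
    define ly where "ly = ln (snd (X t))"
    have p: "fst (X t) > 0" "snd (X t) > 0" using X_pos[OF t] by auto
    have ex: "exp lx = fst (X t)" "exp ly = snd (X t)" using p unfolding lx_def ly_def by auto
    have li: "lx - m1 * ly \<le> c1" "lx - m2 * ly \<ge> c2" using log_ineqs(2)[OF t v] unfolding lx_def ly_def by auto
    have "(m2 - m1) * ly = m2 * ly - m1 * ly" by (simp add: algebra_simps)
    then have "(m2 - m1) * ly \<le> c1 - c2" using li by linarith
    then have lyu: "ly \<le> Uy" unfolding Uy_def by (rule le_div_pos[OF dm])
    have "m1 * ly \<le> m1 * Uy" using lyu m1_bounds by (intro mult_left_mono) auto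
    then have lxu: "lx \<le> Ux" unfolding Ux_def using li by linarith
    have sb: "S0 \<le> fst (X t) + snd (X t)" using sum_mono_neg[OF v t] .
    have lyb: "Ly \<le> ly"
    proof (cases "ly < 0")
      case False then show ?thesis unfolding Ly_def by simp
    next
      case True
      have "ly \<le> m1 * ly"
      proof -
        have "(1 - m1) * ly \<le> 0" using True m1_bounds by (intro mult_nonneg_nonpos) auto
        then show ?thesis by (simp add: algebra_simps)
      qed
      then have y1: "exp ly \<le> exp (m1 * ly)" by simp
      have "lx \<le> c1 + m1 * ly" using li by linarith
      then have "exp lx \<le> exp (c1 + m1 * ly)" by simp
      also have "\<dots> = exp c1 * exp (m1 * ly)" by (simp add: exp_add)
      finally have "S0 \<le> exp c1 * exp (m1 * ly) + exp (m1 * ly)" using sb ex y1 by linarith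
      then have "S0 \<le> (exp c1 + 1) * exp (m1 * ly)" by (simp add: algebra_simps)
      then have "S0 / (exp c1 + 1) \<le> exp (m1 * ly)" by (rule div_le_pos[rotated]) (simp add: add_pos_pos)
      moreover have "S0 / (exp c1 + 1) > 0" using S0_pos by (simp add: add_pos_pos)
      ultimately have "ln (S0 / (exp c1 + 1)) \<le> ln (exp (m1 * ly))"
        by (subst ln_le_cancel_iff) auto
      then have "ln (S0 / (exp c1 + 1)) \<le> m1 * ly" by simp
      then have "ln (S0 / (exp c1 + 1)) / m1 \<le> ly" by (rule div_le_pos[OF m1_bounds(1)])
      then show ?thesis unfolding Ly_def by simp
    qed
    have "m2 * Ly \<le> m2 * ly" using lyb m2_bounds by (intro mult_left_mono) auto
    then have lxb: "Lx \<le> lx" unfolding Lx_def using li by linarith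
    show "min (exp Lx) (exp Ly) \<le> fst (X t)" using lxb ex[symmetric] by (simp add: min.coboundedI1)
    show "min (exp Lx) (exp Ly) \<le> snd (X t)" using lyb ex[symmetric] by (simp add: min.coboundedI2)
    show "fst (X t) \<le> max (exp Ux) (exp Uy)" using lxu ex[symmetric] by (simp add: max.coboundedI1)
    show "snd (X t) \<le> max (exp Ux) (exp Uy)" using lyu ex[symmetric] by (simp add: max.coboundedI2)
  qed
qed

definition "W p = - (r1 p * s1 p + r2 p * s2 p)"
definition "V p = (fst p * (ln (fst p) - ln (fst A)) - fst p) + (snd p * (ln (snd p) - ln (snd A)) - snd p)"

lemma rs_nonpos1: assumes "pos p" shows "r1 p * s1 p \<le> 0"
  using r1_sign[OF assms] by (cases "s1 p" "0::real" rule: linorder_cases) (auto simp: mult_le_0_iff)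
lemma rs_nonpos2: assumes "pos p" shows "r2 p * s2 p \<le> 0"
  using r2_sign[OF assms] by (cases "s2 p" "0::real" rule: linorder_cases) (auto simp: mult_le_0_iff)

lemma W_nonneg: assumes "pos p" shows "W p \<ge> 0"
  using rs_nonpos1[OF assms] rs_nonpos2[OF assms] unfolding W_def by linarith

lemma W_pos: assumes "pos p" "p \<noteq> A" shows "W p > 0"
proof -
  have "s1 p \<noteq> 0 \<or> s2 p \<noteq> 0" using s_zero_imp_A[OF assms(1)] assms(2) by blast
  then have "r1 p * s1 p < 0 \<or> r2 p * s2 p < 0"
    using r1_sign[OF assms(1)] r2_sign[OF assms(1)]
    by (auto simp: mult_less_0_iff neq_iff)
  then show ?thesis using rs_nonpos1[OF assms(1)] rs_nonpos2[OF assms(1)] unfolding W_def by linarith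
qed

lemma Vder: assumes t: "t \<ge> 0"
  shows "((\<lambda>t. V (X t)) has_real_derivative - W (X t)) (at t within {0..})"
proof -
  have p: "fst (X t) > 0" "snd (X t) > 0" using X_pos[OF t] by auto
  have d1: "((\<lambda>t. fst (X t) * (ln (fst (X t)) - ln (fst A)) - fst (X t)) has_real_derivative
      (ln (fst (X t)) - ln (fst A)) * fst (F (X t))) (at t within {0..})"
    by (rule DERIV_chain2[OF ent_der[OF p(1)] Xder1[OF t]])
  have d2: "((\<lambda>t. snd (X t) * (ln (snd (X t)) - ln (snd A)) - snd (X t)) has_real_derivative
      (ln (snd (X t)) - ln (snd A)) * snd (F (X t))) (at t within {0..})"
    by (rule DERIV_chain2[OF ent_der[OF p(2)] Xder2[OF t]])
  have e1: "s1 (X t) = v1x * (ln (fst (X t)) - ln (fst A)) + v1y * (ln (snd (X t)) - ln (snd A))"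
    using s1_A unfolding s1_def by (simp add: algebra_simps)
  have e2: "s2 (X t) = v2x * (ln (fst (X t)) - ln (fst A)) + v2y * (ln (snd (X t)) - ln (snd A))"
    using s2_A unfolding s2_def by (simp add: algebra_simps)
  have "(ln (fst (X t)) - ln (fst A)) * fst (F (X t)) + (ln (snd (X t)) - ln (snd A)) * snd (F (X t)) = - W (X t)"
    unfolding W_def e1 e2 F_eq by (simp add: algebra_simps)
  then show ?thesis using DERIV_add[OF d1 d2] unfolding V_def by simp
qed

lemma r1_cont: "continuous_on K r1" if "\<forall>p\<in>K. pos p" for K
  unfolding r1_def using that unfolding pos_def by (intro continuous_intros) auto
lemma r2_cont: "continuous_on K r2" if "\<forall>p\<in>K. pos p" for K
  unfolding r2_def using that unfolding pos_def by (intro continuous_intros) auto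
lemma s1_cont: "continuous_on K s1" if "\<forall>p\<in>K. pos p" for K
  unfolding s1_def using that unfolding pos_def by (intro continuous_intros) auto
lemma s2_cont: "continuous_on K s2" if "\<forall>p\<in>K. pos p" for K
  unfolding s2_def using that unfolding pos_def by (intro continuous_intros) auto
lemma W_cont: "continuous_on K W" if "\<forall>p\<in>K. pos p" for K
  unfolding W_def[abs_def] using r1_cont[OF that] r2_cont[OF that] s1_cont[OF that] s2_cont[OF that]
  by (intro continuous_intros) auto
lemma V_cont: "continuous_on K V" if "\<forall>p\<in>K. pos p" for K
  unfolding V_def[abs_def] using that unfolding pos_def by (intro continuous_intros) auto
lemma F_cont: "continuous_on K F" if "\<forall>p\<in>K. pos p" for K
proof -
  have "continuous_on K (\<lambda>p. (r1 p * v1x + r2 p * v2x, r1 p * v1y + r2 p * v2y))"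
    using r1_cont[OF that] r2_cont[OF that] by (intro continuous_intros) auto
  then show ?thesis unfolding F_eq[abs_def] .
qed

lemma convergence: "(X \<longlongrightarrow> A) at_top"
proof (rule ccontr)
  assume nc: "\<not> (X \<longlongrightarrow> A) at_top"
  obtain lo hi where lh: "0 < lo" "\<And>t. t \<ge> 0 \<Longrightarrow> lo \<le> fst (X t) \<and> fst (X t) \<le> hi \<and> lo \<le> snd (X t) \<and> snd (X t) \<le> hi"
    using box by blast
  define K where "K = {lo..hi} \<times> {lo..hi}"
  have Kpos: "\<forall>p\<in>K. pos p" unfolding K_def pos_def using lh(1) by auto
  have cK: "compact K" unfolding K_def by (intro compact_Times compact_Icc)
  have XK: "X t \<in> K" if "t \<ge> 0" for t using lh(2)[OF that] unfolding K_def by (simp add: mem_Times_iff)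
  obtain \<delta> where \<delta>: "\<delta> > 0" "\<not> eventually (\<lambda>t. dist (X t) A < \<delta>) at_top"
    using nc unfolding tendsto_iff by blast
  have freq: "\<exists>t\<ge>T. dist (X t) A \<ge> \<delta>" for T
    using \<delta>(2) unfolding eventually_at_top_linorder by (meson not_le)
  define K' where "K' = K \<inter> {p. dist p A \<ge> \<delta> / 2}"
  have cK': "compact K'" unfolding K'_def
    by (intro compact_Int_closed cK closed_Collect_le continuous_intros)
  obtain t0 where t0: "t0 \<ge> 0" "dist (X t0) A \<ge> \<delta>" using freq[of 0] by blast
  have neK': "K' \<noteq> {}" using XK[OF t0(1)] t0(2) \<delta>(1) unfolding K'_def by auto
  have K'pos: "\<forall>p\<in>K'. pos p" using Kpos unfolding K'_def by auto
  obtain p0 where p0: "p0 \<in> K'" "\<And>q. q \<in> K' \<Longrightarrow> W p0 \<le> W q"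
    using continuous_attains_inf[OF cK' neK' W_cont[OF K'pos]] by blast
  define w0 where "w0 = W p0"
  have w0: "w0 > 0" unfolding w0_def
    using p0(1) \<delta>(1) K'pos by (intro W_pos) (auto simp: K'_def)
  have "bounded (F ` K)" by (intro compact_imp_bounded compact_continuous_image F_cont Kpos cK)
  then obtain B where B: "B > 0" "\<And>p. p \<in> K \<Longrightarrow> norm (F p) \<le> B"
    unfolding bounded_pos by blast
  obtain p1 where p1: "p1 \<in> K" "\<And>q. q \<in> K \<Longrightarrow> V p1 \<le> V q"
    using continuous_attains_inf[OF cK _ V_cont[OF Kpos]] XK[of 0] by blast
  define g where "g t = V (X t)" for t
  have gmono: "g t' \<le> g t" if "0 \<le> t" "t \<le> t'" for t t'
    unfolding g_def
    by (rule deriv_nonpos_mono[where a = 0 and g' = "\<lambda>s. - W (X s)", OF Vder])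
       (use that W_nonneg Xpos in auto)
  define G where "G = g ` {0..}"
  have Vlow: "V p1 \<le> g t" if "t \<ge> 0" for t unfolding g_def using p1(2)[OF XK[OF that]] .
  have bG: "bdd_below G" unfolding G_def using Vlow by (intro bdd_belowI[of _ "V p1"]) auto
  have neG: "G \<noteq> {}" unfolding G_def by auto
  define h where "h = \<delta> / (2 * B)"
  have h: "h > 0" unfolding h_def using \<delta> B by simp
  have "Inf G < Inf G + w0 * h" using w0 h by simp
  then have "\<exists>x\<in>G. x < Inf G + w0 * h" using cInf_less_iff[OF neG bG] by blast
  then obtain T0 where T0: "T0 \<ge> 0" "g T0 < Inf G + w0 * h"
    unfolding G_def by auto
  obtain t1 where t1: "t1 \<ge> T0" "dist (X t1) A \<ge> \<delta>" using freq by blast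
  have t10: "t1 \<ge> 0" using t1 T0 by simp
  have close: "norm (X s - X t1) \<le> B * (s - t1)" if "t1 \<le> s" for s
  proof (cases "t1 = s")
    case True then show ?thesis by simp
  next
    case False
    with that have lt: "t1 < s" by simp
    have "norm (X s - X t1) \<le> B * s - B * t1"
    proof (rule differentiable_bound_general[OF lt, where f' = "\<lambda>x. F (X x)" and \<phi>' = "\<lambda>_. B"])
      show "continuous_on {t1..s} X" using Xcont by (rule continuous_on_subset) (use t10 in auto)
      show "continuous_on {t1..s} (\<lambda>x. B * x)" by (intro continuous_intros)
      fix x assume x: "t1 < x" "x < s"
      have "x \<in> interior {0..}" using x t10 by simp
      then have "at x within {0..} = at x" by (rule at_within_interior)
      then show "(X has_vector_derivative F (X x)) (at x)" using X_ode[of x] x t10 by simp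
      show "((\<lambda>x. B * x) has_vector_derivative B) (at x)"
        using has_real_derivative_iff_has_vector_derivative DERIV_cmult_Id by blast
      show "norm (F (X x)) \<le> B" using B(2)[OF XK] x t10 by simp
    qed
    then show ?thesis by (simp add: algebra_simps)
  qed
  have inK': "X s \<in> K'" if "t1 \<le> s" "s \<le> t1 + h" for s
  proof -
    have "B * (s - t1) \<le> B * h" using that(2) B(1) by (intro mult_left_mono) auto
    then have "norm (X s - X t1) \<le> B * h" using close[OF that(1)] by linarith
    also have "B * h = \<delta> / 2" unfolding h_def using B(1) by simp
    finally have "norm (X s - X t1) \<le> \<delta> / 2" .
    moreover have "dist (X t1) A \<le> dist (X s) A + norm (X s - X t1)"
      by (metis dist_commute dist_norm dist_triangle)
    ultimately have "dist (X s) A \<ge> \<delta> / 2" using t1(2) by linarith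
    then show ?thesis using XK[of s] that t10 unfolding K'_def by auto
  qed
  have "(\<lambda>s. g s + w0 * s) (t1 + h) \<le> (\<lambda>s. g s + w0 * s) t1"
  proof (rule deriv_nonpos_mono[where a = 0 and g = "\<lambda>s. g s + w0 * s" and s = t1 and s' = "t1 + h" and g' = "\<lambda>s. - W (X s) + w0"])
    fix s :: real assume "0 \<le> s"
    then show "((\<lambda>s. g s + w0 * s) has_real_derivative - W (X s) + w0) (at s within {0..})"
      unfolding g_def using DERIV_add[OF Vder DERIV_cmult_Id[of w0]] by simp
  next
    fix s assume "t1 \<le> s" "s \<le> t1 + h"
    then show "- W (X s) + w0 \<le> 0" using p0(2)[OF inK'] unfolding w0_def by simp
  qed (use t10 h in auto)
  then have "g (t1 + h) \<le> g t1 - w0 * h" by (simp add: algebra_simps)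
  also have "g t1 \<le> g T0" using gmono T0(1) t1(1) by simp
  finally have "g (t1 + h) < Inf G" using T0(2) by simp
  moreover have "Inf G \<le> g (t1 + h)" unfolding G_def using bG h t10
    by (intro cInf_lower) (auto simp: G_def)
  ultimately show False by simp
qed

definition "xA = fst A"
definition "yA = snd A"
definition "\<kappa>1 = \<epsilon> * xA powr a1 * yA powr b1"
definition "\<kappa>2 = (1/\<epsilon>) * xA powr a2 * yA powr b2"
definition "l1 h = v1x * fst h / xA + v1y * snd h / yA"
definition "l2 h = v2x * fst h / xA + v2y * snd h / yA"
definition "J0 h = (- (\<kappa>1 * l1 h) * v1x - \<kappa>2 * l2 h * v2x, - (\<kappa>1 * l1 h) * v1y - \<kappa>2 * l2 h * v2y)"

lemma xA_pos: "xA > 0" and yA_pos: "yA > 0" using A_pos unfolding xA_def yA_def by auto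
lemma kappa_pos: "\<kappa>1 > 0" "\<kappa>2 > 0" unfolding \<kappa>1_def \<kappa>2_def using eps xA_pos yA_pos by auto

lemma kappa1_alt: "(1/\<epsilon>) * xA powr a1' * yA powr b1' = \<kappa>1"
  using r1_sign(3)[OF A_pos'] s1_A unfolding r1_def \<kappa>1_def xA_def yA_def by simp
lemma kappa2_alt: "\<epsilon> * xA powr a2' * yA powr b2' = \<kappa>2"
  using r2_sign(3)[OF A_pos'] s2_A unfolding r2_def \<kappa>2_def xA_def yA_def by simp

lemma r1_der: "(r1 has_derivative (\<lambda>h. - (\<kappa>1 * l1 h))) (at A)"
proof -
  have "(r1 has_derivative (\<lambda>h. \<epsilon> * (xA powr a1 * (fst h * a1 / xA)) * yA powr b1
       + \<epsilon> * xA powr a1 * (yA powr b1 * (snd h * b1 / yA))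
       - ((1/\<epsilon>) * (xA powr a1' * (fst h * a1' / xA)) * yA powr b1'
       + (1/\<epsilon>) * xA powr a1' * (yA powr b1' * (snd h * b1' / yA))))) (at A)"
    unfolding r1_def[abs_def] xA_def yA_def using A_pos eps
    by (auto intro!: derivative_eq_intros simp: fun_eq_iff field_simps)
  moreover have "(\<lambda>h. \<epsilon> * (xA powr a1 * (fst h * a1 / xA)) * yA powr b1
       + \<epsilon> * xA powr a1 * (yA powr b1 * (snd h * b1 / yA))
       - ((1/\<epsilon>) * (xA powr a1' * (fst h * a1' / xA)) * yA powr b1'
       + (1/\<epsilon>) * xA powr a1' * (yA powr b1' * (snd h * b1' / yA)))) = (\<lambda>h. - (\<kappa>1 * l1 h))"
  proof
    fix h :: "real \<times> real"
    have e1: "\<epsilon> * (xA powr a1 * (fst h * a1 / xA)) * yA powr b1 = \<kappa>1 * (fst h * a1 / xA)"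
      unfolding \<kappa>1_def by simp
    have e2: "\<epsilon> * xA powr a1 * (yA powr b1 * (snd h * b1 / yA)) = \<kappa>1 * (snd h * b1 / yA)"
      unfolding \<kappa>1_def by simp
    have e3: "(1/\<epsilon>) * (xA powr a1' * (fst h * a1' / xA)) * yA powr b1' = \<kappa>1 * (fst h * a1' / xA)"
      unfolding kappa1_alt[symmetric] by simp
    have e4: "(1/\<epsilon>) * xA powr a1' * (yA powr b1' * (snd h * b1' / yA)) = \<kappa>1 * (snd h * b1' / yA)"
      unfolding kappa1_alt[symmetric] by simp
    show "\<epsilon> * (xA powr a1 * (fst h * a1 / xA)) * yA powr b1
       + \<epsilon> * xA powr a1 * (yA powr b1 * (snd h * b1 / yA))
       - ((1/\<epsilon>) * (xA powr a1' * (fst h * a1' / xA)) * yA powr b1'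
       + (1/\<epsilon>) * xA powr a1' * (yA powr b1' * (snd h * b1' / yA))) = - (\<kappa>1 * l1 h)"
      unfolding e1 e2 e3 e4 l1_def by (simp add: algebra_simps add_divide_distrib diff_divide_distrib)
  qed
  ultimately show ?thesis by simp
qed

lemma r2_der: "(r2 has_derivative (\<lambda>h. - (\<kappa>2 * l2 h))) (at A)"
proof -
  have "(r2 has_derivative (\<lambda>h. (1/\<epsilon>) * (xA powr a2 * (fst h * a2 / xA)) * yA powr b2
       + (1/\<epsilon>) * xA powr a2 * (yA powr b2 * (snd h * b2 / yA))
       - (\<epsilon> * (xA powr a2' * (fst h * a2' / xA)) * yA powr b2'
       + \<epsilon> * xA powr a2' * (yA powr b2' * (snd h * b2' / yA))))) (at A)"
    unfolding r2_def[abs_def] xA_def yA_def using A_pos eps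
    by (auto intro!: derivative_eq_intros simp: fun_eq_iff field_simps)
  moreover have "(\<lambda>h. (1/\<epsilon>) * (xA powr a2 * (fst h * a2 / xA)) * yA powr b2
       + (1/\<epsilon>) * xA powr a2 * (yA powr b2 * (snd h * b2 / yA))
       - (\<epsilon> * (xA powr a2' * (fst h * a2' / xA)) * yA powr b2'
       + \<epsilon> * xA powr a2' * (yA powr b2' * (snd h * b2' / yA)))) = (\<lambda>h. - (\<kappa>2 * l2 h))"
  proof
    fix h :: "real \<times> real"
    have e1: "(1/\<epsilon>) * (xA powr a2 * (fst h * a2 / xA)) * yA powr b2 = \<kappa>2 * (fst h * a2 / xA)"
      unfolding \<kappa>2_def by simp
    have e2: "(1/\<epsilon>) * xA powr a2 * (yA powr b2 * (snd h * b2 / yA)) = \<kappa>2 * (snd h * b2 / yA)"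
      unfolding \<kappa>2_def by simp
    have e3: "\<epsilon> * (xA powr a2' * (fst h * a2' / xA)) * yA powr b2' = \<kappa>2 * (fst h * a2' / xA)"
      unfolding kappa2_alt[symmetric] by simp
    have e4: "\<epsilon> * xA powr a2' * (yA powr b2' * (snd h * b2' / yA)) = \<kappa>2 * (snd h * b2' / yA)"
      unfolding kappa2_alt[symmetric] by simp
    show "(1/\<epsilon>) * (xA powr a2 * (fst h * a2 / xA)) * yA powr b2
       + (1/\<epsilon>) * xA powr a2 * (yA powr b2 * (snd h * b2 / yA))
       - (\<epsilon> * (xA powr a2' * (fst h * a2' / xA)) * yA powr b2'
       + \<epsilon> * xA powr a2' * (yA powr b2' * (snd h * b2' / yA))) = - (\<kappa>2 * l2 h)"
      unfolding e1 e2 e3 e4 l2_def by (simp add: algebra_simps add_divide_distrib diff_divide_distrib)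
  qed
  ultimately show ?thesis by simp
qed

lemma F_der: "(F has_derivative J0) (at A)"
proof -
  have "((\<lambda>p. (r1 p * v1x + r2 p * v2x, r1 p * v1y + r2 p * v2y)) has_derivative
     (\<lambda>h. (- (\<kappa>1 * l1 h) * v1x + - (\<kappa>2 * l2 h) * v2x, - (\<kappa>1 * l1 h) * v1y + - (\<kappa>2 * l2 h) * v2y))) (at A)"
    by (intro has_derivative_Pair has_derivative_add has_derivative_mult_left r1_der r2_der)
  moreover have "(\<lambda>h. (- (\<kappa>1 * l1 h) * v1x + - (\<kappa>2 * l2 h) * v2x, - (\<kappa>1 * l1 h) * v1y + - (\<kappa>2 * l2 h) * v2y)) = J0"
    unfolding J0_def by (simp add: fun_eq_iff)
  ultimately show ?thesis unfolding F_eq[abs_def] by simp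
qed

lemma J_eq: "J = J0"
  using has_derivative_unique[OF Jac F_der] .

lemma J_lin: "linear J" using Jac has_derivative_linear by blast

definition "V1 = (v1x, v1y)"
definition "V2 = (v2x, v2y)"
definition "g11 = G11 A"
definition "g12 = G12 A"
definition "g22 = G22 A"
definition "trM = g11 * \<kappa>1 + g22 * \<kappa>2"
definition "dtM = \<kappa>1 * \<kappa>2 * (g11 * g22 - g12^2)"
definition "disc = (g11 * \<kappa>1 - g22 * \<kappa>2)^2 + 4 * g12^2 * \<kappa>1 * \<kappa>2"
definition "lp = (trM + sqrt disc) / 2"
definition "lm = (trM - sqrt disc) / 2"
definition "ev lam = (\<kappa>1 * (g12 * \<kappa>2)) *\<^sub>R V1 + (\<kappa>2 * (lam - g11 * \<kappa>1)) *\<^sub>R V2"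

lemma l1_lin: "l1 (a *\<^sub>R p + b *\<^sub>R q) = a * l1 p + b * l1 q"
  unfolding l1_def by (simp add: divide_inverse algebra_simps)
lemma l2_lin: "l2 (a *\<^sub>R p + b *\<^sub>R q) = a * l2 p + b * l2 q"
  unfolding l2_def by (simp add: divide_inverse algebra_simps)
lemma l1_scale: "l1 (a *\<^sub>R p) = a * l1 p" using l1_lin[of a p 0 p] by simp
lemma l2_scale: "l2 (a *\<^sub>R p) = a * l2 p" using l2_lin[of a p 0 p] by simp
lemma l_V: "l1 V1 = g11" "l1 V2 = g12" "l2 V1 = g12" "l2 V2 = g22"
  unfolding l1_def l2_def V1_def V2_def g11_def g12_def g22_def G11_def G12_def G22_def xA_def yA_def
  by (simp_all add: power2_eq_square algebra_simps)

lemma J0_alt: "J0 h = (- (\<kappa>1 * l1 h)) *\<^sub>R V1 + (- (\<kappa>2 * l2 h)) *\<^sub>R V2"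
  unfolding J0_def V1_def V2_def by (simp add: algebra_simps)

lemma g12_sig: "sig * g12 > 0" unfolding g12_def using sig_G12[OF A_pos'] .
lemma g12_nz: "g12 \<noteq> 0" using g12_sig by auto
lemma g11_pos: "g11 > 0"
  unfolding g11_def G11_def using v1x_nz A_pos by (intro add_pos_nonneg) auto
lemma g22_pos: "g22 > 0"
  unfolding g22_def G22_def using v2x_nz A_pos by (intro add_pos_nonneg) auto

lemma gram: "g11 * g22 - g12^2 > 0"
proof -
  have "g11 * g22 - g12^2 = (v1x * v2y - v1y * v2x)^2 / (fst A * snd A)"
    unfolding g11_def g22_def g12_def G11_def G12_def G22_def using A_pos
    by (simp add: field_simps power2_eq_square)
  then show ?thesis using det_nz A_pos by simp
qed

lemma dtM_pos: "dtM > 0" unfolding dtM_def using kappa_pos gram by simp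
lemma trM_pos: "trM > 0" unfolding trM_def using kappa_pos g11_pos g22_pos by (intro add_pos_pos mult_pos_pos) auto
lemma disc_eq: "disc = trM^2 - 4 * dtM"
  unfolding disc_def trM_def dtM_def by (simp add: power2_eq_square algebra_simps)

lemma sq_facts: "sqrt disc > \<bar>g11 * \<kappa>1 - g22 * \<kappa>2\<bar>" "sqrt disc < trM" "sqrt disc > 0"
proof -
  have "4 * g12^2 * \<kappa>1 * \<kappa>2 > 0" using g12_nz kappa_pos by simp
  then have "(g11 * \<kappa>1 - g22 * \<kappa>2)^2 < disc" unfolding disc_def by simp
  then have "sqrt ((g11 * \<kappa>1 - g22 * \<kappa>2)^2) < sqrt disc" by (rule real_sqrt_less_mono)
  then show a: "sqrt disc > \<bar>g11 * \<kappa>1 - g22 * \<kappa>2\<bar>" by simp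
  have "disc < trM^2" using disc_eq dtM_pos by simp
  then have "sqrt disc < sqrt (trM^2)" by (rule real_sqrt_less_mono)
  then show "sqrt disc < trM" using trM_pos by simp
  show "sqrt disc > 0" using a by linarith
qed

lemma lm_pos: "lm > 0" and lm_lt_lp: "lm < lp"
  using sq_facts unfolding lm_def lp_def by auto
lemma sq2: "g11 * \<kappa>1 - g22 * \<kappa>2 < sqrt disc" "g22 * \<kappa>2 - g11 * \<kappa>1 < sqrt disc"
  using sq_facts(1) by auto
lemma lm_lt: "lm < g11 * \<kappa>1" unfolding lm_def trM_def by (rule half_lem1[OF sq2(2)])
lemma lp_gt: "lp > g11 * \<kappa>1" unfolding lp_def trM_def by (rule half_lem2[OF sq2(1)])

lemma quad_root: "s^2 = T^2 - 4 * d \<Longrightarrow> 2 * l = T + s \<or> 2 * l = T - s \<Longrightarrow> l^2 - T * l + d = 0"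
  for s T d l :: real
  by (elim disjE) algebra+

lemma root: assumes "lam = lp \<or> lam = lm" shows "lam^2 - trM * lam + dtM = 0"
proof (rule quad_root)
  show "(sqrt disc)^2 = trM^2 - 4 * dtM" using sq_facts(3) disc_eq by simp
  show "2 * lam = trM + sqrt disc \<or> 2 * lam = trM - sqrt disc" using assms unfolding lp_def lm_def by auto
qed

lemma l1_ev: "l1 (ev lam) = lam * (g12 * \<kappa>2)"
  unfolding ev_def l1_lin l_V by (simp add: algebra_simps)

lemma l2_ev: assumes "lam = lp \<or> lam = lm" shows "l2 (ev lam) = lam * (lam - g11 * \<kappa>1)"
proof -
  have "l2 (ev lam) = \<kappa>1 * \<kappa>2 * g12^2 + \<kappa>2 * g22 * (lam - g11 * \<kappa>1)"
    unfolding ev_def l2_lin l_V by (simp add: algebra_simps power2_eq_square)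
  also have "\<dots> = lam * (lam - g11 * \<kappa>1)"
    using root[OF assms] unfolding trM_def dtM_def by (simp add: algebra_simps power2_eq_square)
  finally show ?thesis .
qed

lemma J_ev: assumes "lam = lp \<or> lam = lm" shows "J (ev lam) = (- lam) *\<^sub>R ev lam"
proof -
  have "J (ev lam) = (- (\<kappa>1 * (lam * (g12 * \<kappa>2)))) *\<^sub>R V1 + (- (\<kappa>2 * (lam * (lam - g11 * \<kappa>1)))) *\<^sub>R V2"
    unfolding J_eq J0_alt l1_ev l2_ev[OF assms] ..
  also have "\<dots> = (- lam) *\<^sub>R ev lam" unfolding ev_def by (simp add: scaleR_add_right algebra_simps)
  finally show ?thesis .
qed

lemma ev_nz: "lam > 0 \<Longrightarrow> ev lam \<noteq> 0"
proof
  assume "lam > 0" "ev lam = 0"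
  then have "l1 (ev lam) = 0" by (simp add: l1_def)
  then show False using \<open>lam > 0\<close> g12_nz kappa_pos unfolding l1_ev by simp
qed

lemma l_det: "l1 a * l2 b - l2 a * l1 b = (v1x * v2y - v1y * v2x) / (xA * yA) * det2 a b"
  unfolding l1_def l2_def det2_def using xA_pos yA_pos by (simp add: field_simps)

lemma det_ev: "det2 (ev lm) (ev lp) \<noteq> 0"
proof
  assume d0: "det2 (ev lm) (ev lp) = 0"
  have "l1 (ev lm) * l2 (ev lp) - l2 (ev lm) * l1 (ev lp) = lm * lp * (g12 * \<kappa>2) * (lp - lm)"
    unfolding l1_ev l2_ev[OF disjI1[OF refl]] l2_ev[OF disjI2[OF refl]] by (simp add: algebra_simps)
  moreover have "lm * lp * (g12 * \<kappa>2) * (lp - lm) \<noteq> 0"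
    using lm_pos lm_lt_lp g12_nz kappa_pos by simp
  ultimately show False using l_det[of "ev lm" "ev lp"] d0 by simp
qed

definition "u0 = ev lm"
definition "uu = (1 / norm u0) *\<^sub>R u0"
definition "ww = ev lp"
definition "\<alpha>1 = sig * l1 uu"
definition "\<alpha>2 = - l2 uu"
definition "\<beta>1 = sig * l1 ww"
definition "\<beta>2 = l2 ww"

lemma u0_nz: "u0 \<noteq> 0" unfolding u0_def using ev_nz lm_pos by simp
lemma ww_nz: "ww \<noteq> 0" unfolding ww_def using ev_nz lm_pos lm_lt_lp by simp
lemma nu_pos: "norm u0 > 0" using u0_nz by simp
lemma uu_norm: "norm uu = 1" unfolding uu_def using u0_nz by simp

lemma J_uu: "J uu = (- lm) *\<^sub>R uu"
proof -
  have "J uu = (1 / norm u0) *\<^sub>R J u0" unfolding uu_def using J_lin by (simp add: linear_scale)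
  also have "J u0 = (- lm) *\<^sub>R u0" unfolding u0_def by (rule J_ev) simp
  finally show ?thesis unfolding uu_def by simp
qed
lemma J_ww: "J ww = (- lp) *\<^sub>R ww" unfolding ww_def by (rule J_ev) simp

lemma det_uw: "det2 uu ww \<noteq> 0"
  unfolding uu_def ww_def det2_scale u0_def using det_ev nu_pos u0_def by simp

lemma alpha_beta_pos: "\<alpha>1 > 0" "\<alpha>2 > 0" "\<beta>1 > 0" "\<beta>2 > 0"
proof -
  have l1u: "l1 uu = lm * (g12 * \<kappa>2) / norm u0" unfolding uu_def l1_scale u0_def l1_ev by simp
  have l2u: "l2 uu = lm * (lm - g11 * \<kappa>1) / norm u0" unfolding uu_def l2_scale u0_def
    using l2_ev[OF disjI2[OF refl]] by simp
  have "sig * l1 uu = lm * \<kappa>2 * (sig * g12) / norm u0" unfolding l1u by (simp add: algebra_simps)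
  then show "\<alpha>1 > 0" unfolding \<alpha>1_def using lm_pos kappa_pos g12_sig nu_pos by simp
  have "lm * (lm - g11 * \<kappa>1) < 0" using lm_pos lm_lt by (simp add: mult_pos_neg)
  then show "\<alpha>2 > 0" unfolding \<alpha>2_def l2u using nu_pos by (simp add: divide_neg_pos)
  have "sig * l1 ww = (lp * \<kappa>2) * (sig * g12)" unfolding ww_def l1_ev by (simp only: mult_ac)
  moreover have "lp * \<kappa>2 > 0" using lm_pos lm_lt_lp kappa_pos by simp
  ultimately show "\<beta>1 > 0" unfolding \<beta>1_def using g12_sig by (metis mult_pos_pos)
  show "\<beta>2 > 0" unfolding \<beta>2_def ww_def using l2_ev[OF disjI1[OF refl]] lm_pos lm_lt_lp lp_gt by simp
qed

lemma phi_formula: "\<beta>2 * (sig * l1 h) - \<beta>1 * l2 h = (\<alpha>1 * \<beta>2 + \<alpha>2 * \<beta>1) * (det2 h ww / det2 uu ww)"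
proof -
  define \<phi> where "\<phi> = det2 h ww / det2 uu ww"
  define \<psi> where "\<psi> = det2 uu h / det2 uu ww"
  have dec: "h = \<phi> *\<^sub>R uu + \<psi> *\<^sub>R ww" unfolding \<phi>_def \<psi>_def by (rule det2_decomp[OF det_uw])
  have "l1 h = \<phi> * l1 uu + \<psi> * l1 ww" by (subst dec) (rule l1_lin)
  moreover have "l2 h = \<phi> * l2 uu + \<psi> * l2 ww" by (subst dec) (rule l2_lin)
  ultimately have "\<beta>2 * (sig * l1 h) - \<beta>1 * l2 h = \<phi> * (\<beta>2 * \<alpha>1 + \<beta>1 * \<alpha>2) + \<psi> * (\<beta>2 * \<beta>1 - \<beta>1 * \<beta>2)"
    unfolding \<alpha>1_def \<alpha>2_def \<beta>1_def \<beta>2_def by (simp add: algebra_simps)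
  then show ?thesis unfolding \<phi>_def by (simp add: algebra_simps)
qed

definition "dt = v1x * v2y - v1y * v2x"
definition "Cl = (xA * (\<bar>v2y\<bar> + \<bar>v1y\<bar>) + yA * (\<bar>v1x\<bar> + \<bar>v2x\<bar>)) / \<bar>dt\<bar> + 1"

lemma Cl_pos: "Cl > 0"
proof -
  have "(xA * (\<bar>v2y\<bar> + \<bar>v1y\<bar>) + yA * (\<bar>v1x\<bar> + \<bar>v2x\<bar>)) / \<bar>dt\<bar> \<ge> 0"
    using xA_pos yA_pos by simp
  then show ?thesis unfolding Cl_def by linarith
qed

lemma abs_comb: "\<bar>p * x - q * y\<bar> \<le> (\<bar>p\<bar> + \<bar>q\<bar>) * (\<bar>x\<bar> + \<bar>y\<bar>)" for p q x y :: real
proof -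
  have "\<bar>p * x - q * y\<bar> \<le> \<bar>p\<bar> * \<bar>x\<bar> + \<bar>q\<bar> * \<bar>y\<bar>" by (metis abs_mult abs_triangle_ineq4)
  also have "\<dots> \<le> (\<bar>p\<bar> + \<bar>q\<bar>) * (\<bar>x\<bar> + \<bar>y\<bar>)" by (simp add: algebra_simps)
  finally show ?thesis .
qed

lemma norm_le_l: "norm h \<le> Cl * (\<bar>l1 h\<bar> + \<bar>l2 h\<bar>)"
proof -
  have dt0: "dt \<noteq> 0" unfolding dt_def using det_nz .
  have "xA * (v2y * l1 h - v1y * l2 h) = fst h * dt"
    unfolding l1_def l2_def dt_def using xA_pos yA_pos by (simp add: field_simps)
  then have f: "fst h = xA * (v2y * l1 h - v1y * l2 h) / dt" using dt0 by (simp add: eq_divide_eq)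
  have "yA * (v1x * l2 h - v2x * l1 h) = snd h * dt"
    unfolding l1_def l2_def dt_def using xA_pos yA_pos by (simp add: field_simps)
  then have s: "snd h = yA * (v1x * l2 h - v2x * l1 h) / dt" using dt0 by (simp add: eq_divide_eq)
  have "\<bar>fst h\<bar> = xA / \<bar>dt\<bar> * \<bar>v2y * l1 h - v1y * l2 h\<bar>" unfolding f using xA_pos by (simp add: abs_mult abs_divide)
  also have "\<dots> \<le> xA / \<bar>dt\<bar> * ((\<bar>v2y\<bar> + \<bar>v1y\<bar>) * (\<bar>l1 h\<bar> + \<bar>l2 h\<bar>))"
    using xA_pos by (intro mult_left_mono abs_comb) auto
  finally have fb: "\<bar>fst h\<bar> \<le> xA * (\<bar>v2y\<bar> + \<bar>v1y\<bar>) / \<bar>dt\<bar> * (\<bar>l1 h\<bar> + \<bar>l2 h\<bar>)" by simp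
  have "\<bar>snd h\<bar> = yA / \<bar>dt\<bar> * \<bar>v1x * l2 h - v2x * l1 h\<bar>" unfolding s using yA_pos by (simp add: abs_mult abs_divide)
  also have "\<dots> \<le> yA / \<bar>dt\<bar> * ((\<bar>v1x\<bar> + \<bar>v2x\<bar>) * (\<bar>l2 h\<bar> + \<bar>l1 h\<bar>))"
    using yA_pos by (intro mult_left_mono abs_comb) auto
  finally have sb: "\<bar>snd h\<bar> \<le> yA * (\<bar>v1x\<bar> + \<bar>v2x\<bar>) / \<bar>dt\<bar> * (\<bar>l1 h\<bar> + \<bar>l2 h\<bar>)" by (simp add: add.commute)
  have "norm h \<le> \<bar>fst h\<bar> + \<bar>snd h\<bar>" using norm_Pair_le[of "fst h" "snd h"] by simp
  also have "\<dots> \<le> (xA * (\<bar>v2y\<bar> + \<bar>v1y\<bar>) / \<bar>dt\<bar> + yA * (\<bar>v1x\<bar> + \<bar>v2x\<bar>) / \<bar>dt\<bar>) * (\<bar>l1 h\<bar> + \<bar>l2 h\<bar>)"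
    using fb sb by (simp add: algebra_simps)
  also have "\<dots> \<le> Cl * (\<bar>l1 h\<bar> + \<bar>l2 h\<bar>)" unfolding Cl_def
    by (intro mult_right_mono) (auto simp: add_divide_distrib)
  finally show ?thesis .
qed

lemma s1_derA: "(s1 has_derivative l1) (at A)"
  unfolding s1_def[abs_def] l1_def[abs_def] xA_def yA_def using A_pos
  by (auto intro!: derivative_eq_intros simp: fun_eq_iff field_simps)
lemma s2_derA: "(s2 has_derivative l2) (at A)"
  unfolding s2_def[abs_def] l2_def[abs_def] xA_def yA_def using A_pos
  by (auto intro!: derivative_eq_intros simp: fun_eq_iff field_simps)

lemma abs_sig: "\<bar>sig * z\<bar> = \<bar>z\<bar>" unfolding sig_def by (simp add: abs_mult)

definition "\<gamma>0 = \<alpha>1 * \<beta>2 + \<alpha>2 * \<beta>1"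
definition "mb = min \<beta>1 \<beta>2"
definition "Kc = 2 * Cl * \<gamma>0 / mb"

lemma Kc_pos: "Kc > 0"
  unfolding Kc_def \<gamma>0_def mb_def using alpha_beta_pos Cl_pos
  by (intro divide_pos_pos mult_pos_pos add_pos_pos) auto

lemma cone_ev: "eventually (\<lambda>t. norm (X t - A) \<le> Kc * (det2 (X t - A) ww / det2 uu ww)) at_top"
proof -
  have mb: "mb > 0" "mb \<le> \<beta>1" "mb \<le> \<beta>2" unfolding mb_def using alpha_beta_pos by auto
  define \<delta> where "\<delta> = mb / (2 * Cl * (2 * mb + \<beta>1 + \<beta>2))"
  have \<delta>0: "\<delta> > 0" unfolding \<delta>_def using mb alpha_beta_pos Cl_pos by simp
  have hd: "\<delta> * (2 * mb + \<beta>1 + \<beta>2) \<le> mb / (2 * Cl)"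
    unfolding \<delta>_def using mb alpha_beta_pos Cl_pos by simp
  obtain r1' where r1': "r1' > 0" "\<forall>y. norm (y - A) < r1' \<longrightarrow> norm (s1 y - s1 A - l1 (y - A)) \<le> \<delta> * norm (y - A)"
    using s1_derA \<delta>0 unfolding has_derivative_at_alt by blast
  obtain r2' where r2': "r2' > 0" "\<forall>y. norm (y - A) < r2' \<longrightarrow> norm (s2 y - s2 A - l2 (y - A)) \<le> \<delta> * norm (y - A)"
    using s2_derA \<delta>0 unfolding has_derivative_at_alt by blast
  have "eventually (\<lambda>t. dist (X t) A < min r1' r2') at_top"
    using convergence r1'(1) r2'(1) by (intro tendstoD) auto
  moreover have "eventually (\<lambda>t::real. t \<ge> 0) at_top" by (rule eventually_ge_at_top)
  ultimately show ?thesis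
  proof eventually_elim
    case (elim t)
    define h where "h = X t - A"
    define n where "n = norm h"
    have nh: "norm (X t - A) < r1'" "norm (X t - A) < r2'" using elim(1) by (auto simp: dist_norm)
    have e1: "\<bar>s1 (X t) - l1 h\<bar> \<le> \<delta> * n" using r1'(2)[rule_format, OF nh(1)] s1_A unfolding h_def n_def by simp
    have e2: "\<bar>s2 (X t) - l2 h\<bar> \<le> \<delta> * n" using r2'(2)[rule_format, OF nh(2)] s2_A unfolding h_def n_def by simp
    have Q: "sig * s1 (X t) \<ge> 0" "s2 (X t) \<le> 0" using invariance[OF elim(2)] unfolding Qinv_def by auto
    have "\<bar>sig * s1 (X t) - sig * l1 h\<bar> = \<bar>s1 (X t) - l1 h\<bar>"
      using abs_sig[of "s1 (X t) - l1 h"] by (simp add: algebra_simps)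
    then have ha: "sig * l1 h \<ge> - (\<delta> * n)" using e1 Q(1) by (simp add: abs_le_iff) linarith
    have hb: "l2 h \<le> \<delta> * n" using e2 Q(2) by (simp add: abs_le_iff)
    have hn: "n \<le> Cl * (\<bar>sig * l1 h\<bar> + \<bar>l2 h\<bar>)" unfolding abs_sig n_def by (rule norm_le_l)
    have "\<beta>2 * (sig * l1 h) - \<beta>1 * l2 h \<ge> mb / (2 * Cl) * n"
      by (rule cone_arith[OF mb(2) mb(3) mb(1) Cl_pos _ less_imp_le[OF \<delta>0] ha hb hn hd]) (simp add: n_def)
    then have "mb / (2 * Cl) * n \<le> \<gamma>0 * (det2 h ww / det2 uu ww)" unfolding phi_formula \<gamma>0_def .
    moreover define ph where "ph = det2 h ww / det2 uu ww"
    ultimately have "(mb / (2 * Cl)) * n \<le> \<gamma>0 * ph" by simp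
    then have "n \<le> (\<gamma>0 * ph) / (mb / (2 * Cl))" using mb(1) Cl_pos by (intro le_div_pos) auto
    also have "(\<gamma>0 * ph) / (mb / (2 * Cl)) = Kc * ph" unfolding Kc_def using mb(1) Cl_pos by simp
    finally show ?case unfolding h_def n_def ph_def .
  qed
qed

lemma main: "(X \<longlongrightarrow> A) at_top \<and>
    (\<exists>mu1 mu2 u w.
       mu1 \<noteq> mu2 \<and> \<bar>mu1\<bar> < \<bar>mu2\<bar> \<and>
       w \<noteq> 0 \<and> J w = mu2 *\<^sub>R w \<and>
       norm u = 1 \<and> J u = mu1 *\<^sub>R u \<and>
       ((\<lambda>t. (1 / norm (X t - A)) *\<^sub>R (X t - A)) \<longlongrightarrow> u) at_top)"
proof (intro conjI exI)
  show "(X \<longlongrightarrow> A) at_top" by (rule convergence)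
  show "- lm \<noteq> - lp" using lm_lt_lp by simp
  show "\<bar>- lm\<bar> < \<bar>- lp\<bar>" using lm_pos lm_lt_lp by simp
  show "ww \<noteq> 0" by (rule ww_nz)
  show "J ww = (- lp) *\<^sub>R ww" by (rule J_ww)
  show "norm uu = 1" by (rule uu_norm)
  show "J uu = (- lm) *\<^sub>R uu" by (rule J_uu)
  show "((\<lambda>t. (1 / norm (X t - A)) *\<^sub>R (X t - A)) \<longlongrightarrow> uu) at_top"
  proof (rule node[where J = J and R = "\<lambda>t. F (X t) - J (X t - A)" and w = ww and K = Kc])
    show "linear J" by (rule J_lin)
    show "J uu = (- lm) *\<^sub>R uu" by (rule J_uu)
    show "J ww = (- lp) *\<^sub>R ww" by (rule J_ww)
    show "- lp < - lm" using lm_lt_lp by simp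
    show "norm uu = 1" by (rule uu_norm)
    show "det2 uu ww \<noteq> 0" by (rule det_uw)
    show "Kc > 0" by (rule Kc_pos)
    show "eventually (\<lambda>t. norm (X t - A) \<le> Kc * (det2 (X t - A) ww / det2 uu ww)) at_top" by (rule cone_ev)
    fix t :: real assume t: "t \<ge> 0"
    show "X t - A \<noteq> 0" using X_ne_A[OF t] by simp
    have "((\<lambda>t. X t - A) has_vector_derivative F (X t) - 0) (at t within {0..})"
      by (intro derivative_intros X_ode t)
    then show "((\<lambda>t. X t - A) has_vector_derivative J (X t - A) + (F (X t) - J (X t - A))) (at t within {0..})"
      by simp
  next
    fix e :: real assume e: "e > 0"
    obtain r where r: "r > 0" "\<forall>y. norm (y - A) < r \<longrightarrow> norm (F y - F A - J (y - A)) \<le> e * norm (y - A)"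
      using Jac e unfolding has_derivative_at_alt by blast
    have "eventually (\<lambda>t. dist (X t) A < r) at_top" using convergence r(1) by (rule tendstoD)
    then show "eventually (\<lambda>t. norm (F (X t) - J (X t - A)) \<le> e * norm (X t - A)) at_top"
    proof eventually_elim
      case (elim t)
      then show ?case using r(2)[rule_format, of "X t"] F_A by (simp add: dist_norm)
    qed
  qed
qed

end

theorem proposition4p10:
  fixes a1 b1 a1' b1' a2 b2 a2' b2' \<epsilon> :: real
    and A D :: "real \<times> real"
    and X :: "real \<Rightarrow> real \<times> real"
    and J :: "real \<times> real \<Rightarrow> real \<times> real"
  assumes nonneg: "a1 \<ge> 0" "b1 \<ge> 0" "a1' \<ge> 0" "b1' \<ge> 0"
                  "a2 \<ge> 0" "b2 \<ge> 0" "a2' \<ge> 0" "b2' \<ge> 0"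
    and slope1: "-1 < (b1' - b1) / (a1' - a1)" "(b1' - b1) / (a1' - a1) < 0"
    and slope2: "(b2' - b2) / (a2' - a2) < -1"
    and eps: "0 < \<epsilon>" "\<epsilon> < 1"
    and A_pos: "fst A > 0" "snd A > 0"
    and A_eq1: "fst A powr (a1' - a1) * snd A powr (b1' - b1) = \<epsilon>^2"
    and A_eq2: "fst A powr (a2' - a2) * snd A powr (b2' - b2) = 1 / \<epsilon>^2"
    and D_pos: "fst D > 0" "snd D > 0"
    and D_eq1: "fst D powr (a1' - a1) * snd D powr (b1' - b1) = \<epsilon>^2"
    and D_eq2: "fst D powr (a2' - a2) * snd D powr (b2' - b2) = \<epsilon>^2"
    and X0: "X 0 = D"
    and X_pos: "\<And>t. t \<ge> 0 \<Longrightarrow> fst (X t) > 0 \<and> snd (X t) > 0"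
    and X_ode: "\<And>t. t \<ge> 0 \<Longrightarrow>
       (X has_vector_derivative mass_action_field a1 b1 a1' b1' a2 b2 a2' b2' \<epsilon> (X t))
         (at t within {0..})"
    and Jac: "(mass_action_field a1 b1 a1' b1' a2 b2 a2' b2' \<epsilon> has_derivative J) (at A)"
  shows "(X \<longlongrightarrow> A) at_top \<and>
    (\<exists>mu1 mu2 u w.
       mu1 \<noteq> mu2 \<and> \<bar>mu1\<bar> < \<bar>mu2\<bar> \<and>
       w \<noteq> 0 \<and> J w = mu2 *\<^sub>R w \<and>
       norm u = 1 \<and> J u = mu1 *\<^sub>R u \<and>
       ((\<lambda>t. (1 / norm (X t - A)) *\<^sub>R (X t - A)) \<longlongrightarrow> u) at_top)"
  proof -
  interpret P410 a1 b1 a1' b1' a2 b2 a2' b2' \<epsilon> A D X J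
    by (rule P410.intro[OF slope1 slope2 eps A_pos A_eq1 A_eq2 D_pos D_eq1 D_eq2 X0 X_pos X_ode Jac])
  show ?thesis by (rule main)
qed

end
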